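(* Let $S\in\{0,1\}$ be an endogenous binary selection indicator (with $S=1$ meaning the unit is included and its label $Y$ observed), let $Z\subseteq V$ be a set of endogenous variables, and let $(d,\theta)$, $(d',\theta')$ be values of the inputs. Suppose $Y\perp\!\!\!\perp\{D,\Theta,S\}\mid X,Z$ and $\mathbb{P}(X,Z\mid\mathrm{do}(D=d,\Theta=\theta))\ll\mathbb{P}(X,Z\mid S=1,\mathrm{do}(D=d',\Theta=\theta'))$. Then $\mathbb{E}[Y\mid X,\mathrm{do}(D=d,\Theta=\theta)]$ is identifiable in $\mathcal{M}$ from $\{\mathbb{P}(X,Y,Z\mid S=1,\mathrm{do}(D=d',\Theta=\theta')),\ \mathbb{P}(X,Z\mid\mathrm{do}(D=d,\Theta=\theta))\}$, and $$\mathbb{E}[Y\mid X,\mathrm{do}(D=d,\Theta=\theta)]=\mathbb{E}\big[\mathbb{E}[Y\mid X,Z,S=1]\,\big|\,X,\mathrm{do}(D=d,\Theta=\theta)\big]$$ holds $\mathbb{P}(X\mid\mathrm{do}(D=d,\Theta=\theta))$-almost everywhere.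
   Context: Setting: all variables take values in subsets of Euclidean spaces with Borel $\sigma$-algebras. Variables: features $X$, target $Y$ (real-valued), prediction $\hat{Y}$, and two input (non-random, externally set) variables: a domain indicator $D\in\{0,1\}$ (deployment of a decision support system) and parameters $\Theta$. A structural causal model (SCM) with input variables $\{D,\Theta\}$ induces, for every value $(d,\theta)$, a distribution $\mathbb{P}(\cdot\mid\mathrm{do}(D=d,\Theta=\theta))$ on the endogenous variables (push-forward of independent exogenous distributions through the structural equations). The class $\mathcal{M}$: the set of SCMs with endogenous variables $V\supseteq\{X,\hat{Y},Y\}$, input variables $\{D,\Theta\}$, and graph $G$ such that the parents of $\hat{Y}$ are exactly $\{X,\Theta\}$, the children of $D$ equal the children of $\hat{Y}$, and the latent projection of $G$ onto $\{X,\hat{Y},Y,D,\Theta\}$ is a subgraph of the acyclic directed mixed graph with edges $X\to\hat{Y}$, $\Theta\to\hat{Y}$, $X\to Y$, $\hat{Y}\to Y$, $D\to Y$, $X\leftrightarrow Y$. Identifiability: a target quantity $t(M)$ is identifiable in $\mathcal{M}$ from a set $s(M)$ of distributions induced by $M$ if $s(M_1)=s(M_2)\implies t(M_1)=t(M_2)$ for all $M_1,M_2\in\mathcal{M}$. The conditional independence $Y\perp\!\!\!\perp\{D,\Theta,S\}\mid X,Z$ is meant in the transitional sense (implied by d-separation in the graph). $\ll$ denotes absolute continuity. *)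

theory Defs
  imports "HOL-Probability.Probability"
begin

text \<open>Every variable takes values in (a subset of) some R^k. To have a single type for
all variables, R^k is embedded into real sequences (nat => real) as the sequences
vanishing from index k on; the product sigma-algebra on nat => real induces the Borel
sigma-algebra of R^k on that copy.\<close>

type_synonym vec = "nat \<Rightarrow> real"

definition vspace :: "vec measure" where
  "vspace = PiM UNIV (\<lambda>_. (borel :: real measure))"

definition euc :: "nat \<Rightarrow> vec set" where
  "euc k = {u. \<forall>i\<ge>k. u i = 0}"

definition enc :: "real \<Rightarrow> vec" where
  "enc r = (\<lambda>i. if i = 0 then r else 0)"

datatype inp = InD | InTh

datatype 'v node = Endo 'v | Inp inp | Exo nat

record 'v scm =
  endo :: "'v set"
  exo  :: "nat set"
  dimv :: "'v \<Rightarrow> nat"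
  pa   :: "'v \<Rightarrow> 'v node set"
  fn   :: "'v \<Rightarrow> ('v node \<Rightarrow> vec) \<Rightarrow> vec"
  pexo :: "nat \<Rightarrow> vec measure"

definition edges :: "'v scm \<Rightarrow> ('v node \<times> 'v node) set" where
  "edges M = {(p, Endo v) | p v. v \<in> endo M \<and> p \<in> pa M v}"

definition wf_scm :: "'v scm \<Rightarrow> bool" where
  "wf_scm M \<longleftrightarrow>
     finite (endo M) \<and> finite (exo M) \<and>
     (\<forall>v\<in>endo M. pa M v \<subseteq> Endo ` endo M \<union> range Inp \<union> Exo ` exo M) \<and>
     acyclic (edges M) \<and>
     (\<forall>v\<in>endo M. fn M v \<in> measurable (PiM (pa M v) (\<lambda>_. vspace)) vspace) \<and>
     (\<forall>v\<in>endo M. \<forall>a. fn M v a = fn M v (restrict a (pa M v))) \<and>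
     (\<forall>v\<in>endo M. \<forall>a. fn M v a \<in> euc (dimv M v)) \<and>
     (\<forall>e\<in>exo M. prob_space (pexo M e) \<and> sets (pexo M e) = sets vspace \<and>
                 (\<exists>k. emeasure (pexo M e) (euc k) = 1))"

definition asg :: "real \<Rightarrow> vec \<Rightarrow> (nat \<Rightarrow> vec) \<Rightarrow> ('v \<Rightarrow> vec) \<Rightarrow> 'v node \<Rightarrow> vec" where
  "asg d th u s n = (case n of Endo v \<Rightarrow> s v | Inp InD \<Rightarrow> enc d | Inp InTh \<Rightarrow> th | Exo e \<Rightarrow> u e)"

text \<open>The (unique, by acyclicity) solution of the structural equations.\<close>
definition sol :: "'v scm \<Rightarrow> real \<Rightarrow> vec \<Rightarrow> (nat \<Rightarrow> vec) \<Rightarrow> 'v \<Rightarrow> vec" where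
  "sol M d th u = (THE s. s \<in> extensional (endo M) \<and>
                          (\<forall>v\<in>endo M. s v = fn M v (asg d th u s)))"

text \<open>P( . | do(D=d, Theta=th)): push-forward of the independent exogenous
distributions through the structural equations.\<close>
definition Pdo :: "'v scm \<Rightarrow> real \<Rightarrow> vec \<Rightarrow> ('v \<Rightarrow> vec) measure" where
  "Pdo M d th = distr (PiM (exo M) (pexo M)) (PiM (endo M) (\<lambda>_. vspace)) (sol M d th)"

definition Psel :: "'v scm \<Rightarrow> 'v \<Rightarrow> real \<Rightarrow> vec \<Rightarrow> ('v \<Rightarrow> vec) measure" where
  "Psel M S d th = uniform_measure (Pdo M d th) {\<omega> \<in> space (Pdo M d th). \<omega> S = enc 1}"

text \<open>Directed paths of length >= 1 all of whose intermediate nodes lie in L.\<close>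
definition via :: "('a \<times> 'a) set \<Rightarrow> 'a set \<Rightarrow> ('a \<times> 'a) set" where
  "via E L = {(x, y). (x, y) \<in> E \<and> y \<in> L}\<^sup>* O E"

definition obsnodes :: "'v \<Rightarrow> 'v \<Rightarrow> 'v \<Rightarrow> 'v node set" where
  "obsnodes X Yh Y = {Endo X, Endo Yh, Endo Y, Inp InD, Inp InTh}"

text \<open>Latent projection onto O (all other nodes, endogenous and exogenous, latent).\<close>
definition proj_dir :: "'v scm \<Rightarrow> 'v node set \<Rightarrow> 'v node \<Rightarrow> 'v node \<Rightarrow> bool" where
  "proj_dir M Ob a b \<longleftrightarrow> a \<in> Ob \<and> b \<in> Ob \<and> (a, b) \<in> via (edges M) (- Ob)"

definition proj_bidir :: "'v scm \<Rightarrow> 'v node set \<Rightarrow> 'v node \<Rightarrow> 'v node \<Rightarrow> bool" where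
  "proj_bidir M Ob a b \<longleftrightarrow> a \<in> Ob \<and> b \<in> Ob \<and> a \<noteq> b \<and>
     (\<exists>c. c \<notin> Ob \<and> (c, a) \<in> via (edges M) (- Ob) \<and> (c, b) \<in> via (edges M) (- Ob))"

definition in_class :: "'v \<Rightarrow> 'v \<Rightarrow> 'v \<Rightarrow> 'v scm \<Rightarrow> bool" where
  "in_class X Yh Y M \<longleftrightarrow>
     wf_scm M \<and> X \<in> endo M \<and> Yh \<in> endo M \<and> Y \<in> endo M \<and>
     X \<noteq> Yh \<and> X \<noteq> Y \<and> Yh \<noteq> Y \<and> dimv M Y = 1 \<and>
     pa M Yh - range Exo = {Endo X, Inp InTh} \<and>
     {v \<in> endo M. Inp InD \<in> pa M v} = {v \<in> endo M. Endo Yh \<in> pa M v} \<and>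
     (\<forall>a b. proj_dir M (obsnodes X Yh Y) a b \<longrightarrow>
        (a, b) \<in> {(Endo X, Endo Yh), (Inp InTh, Endo Yh), (Endo X, Endo Y),
                  (Endo Yh, Endo Y), (Inp InD, Endo Y)}) \<and>
     (\<forall>a b. proj_bidir M (obsnodes X Yh Y) a b \<longrightarrow> {a, b} = {Endo X, Endo Y})"

definition sel_setup :: "'v \<Rightarrow> 'v set \<Rightarrow> 'v scm \<Rightarrow> bool" where
  "sel_setup S Z M \<longleftrightarrow> S \<in> endo M \<and> Z \<subseteq> endo M \<and>
     (\<forall>a. fn M S a \<in> {enc 0, enc 1})"

definition XZspace :: "'v set \<Rightarrow> (vec \<times> ('v \<Rightarrow> vec)) measure" where
  "XZspace Z = vspace \<Otimes>\<^sub>M PiM Z (\<lambda>_. vspace)"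

definition XZSspace :: "'v set \<Rightarrow> (vec \<times> ('v \<Rightarrow> vec) \<times> vec) measure" where
  "XZSspace Z = vspace \<Otimes>\<^sub>M (PiM Z (\<lambda>_. vspace) \<Otimes>\<^sub>M vspace)"

definition XYZspace :: "'v set \<Rightarrow> (vec \<times> real \<times> ('v \<Rightarrow> vec)) measure" where
  "XYZspace Z = vspace \<Otimes>\<^sub>M (borel \<Otimes>\<^sub>M PiM Z (\<lambda>_. vspace))"

text \<open>There is a Markov kernel Q(Y | X, Z) such that for all input values
P(Y, X, Z, S | do(d, th)) = Q(Y | X, Z) (x) P(X, Z, S | do(d, th)).\<close>
definition trans_ci :: "'v scm \<Rightarrow> vec set \<Rightarrow> 'v \<Rightarrow> 'v \<Rightarrow> 'v \<Rightarrow> 'v set \<Rightarrow> bool" where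
  "trans_ci M Th X Y S Z \<longleftrightarrow>
     (\<exists>Q. Q \<in> measurable (XZspace Z) (prob_algebra (borel :: real measure)) \<and>
       (\<forall>d\<in>{0, 1}. \<forall>th\<in>Th. \<forall>A\<in>sets borel. \<forall>B\<in>sets (XZSspace Z).
          emeasure (Pdo M d th)
            {\<omega> \<in> space (Pdo M d th). \<omega> Y 0 \<in> A \<and> (\<omega> X, restrict \<omega> Z, \<omega> S) \<in> B}
          = (\<integral>\<^sup>+ \<omega>. indicator B (\<omega> X, restrict \<omega> Z, \<omega> S) *
                     emeasure (Q (\<omega> X, restrict \<omega> Z)) A \<partial>Pdo M d th)))"

text \<open>h is a version of E[Yf | W] under P (h as a function of the value of W).\<close>
definition is_cexp :: "'a measure \<Rightarrow> ('a \<Rightarrow> 'b) \<Rightarrow> 'b measure \<Rightarrow> ('a \<Rightarrow> real) \<Rightarrow> ('b \<Rightarrow> real) \<Rightarrow> bool" where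
  "is_cexp P W N Yf h \<longleftrightarrow>
     W \<in> measurable P N \<and> h \<in> borel_measurable N \<and>
     integrable P Yf \<and> integrable P (\<lambda>\<omega>. h (W \<omega>)) \<and>
     (\<forall>A\<in>sets N. set_lebesgue_integral P (W -` A \<inter> space P) Yf
                 = set_lebesgue_integral P (W -` A \<inter> space P) (\<lambda>\<omega>. h (W \<omega>)))"

definition hyps :: "vec set \<Rightarrow> 'v \<Rightarrow> 'v \<Rightarrow> 'v \<Rightarrow> 'v \<Rightarrow> 'v set \<Rightarrow>
                    real \<Rightarrow> vec \<Rightarrow> real \<Rightarrow> vec \<Rightarrow> 'v scm \<Rightarrow> bool" where
  "hyps Th X Yh Y S Z d th d' th' M \<longleftrightarrow>
     in_class X Yh Y M \<and> sel_setup S Z M \<and> trans_ci M Th X Y S Z \<and>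
     absolutely_continuous
       (distr (Psel M S d' th') (XZspace Z) (\<lambda>\<omega>. (\<omega> X, restrict \<omega> Z)))
       (distr (Pdo M d th) (XZspace Z) (\<lambda>\<omega>. (\<omega> X, restrict \<omega> Z)))"

definition obs :: "'v \<Rightarrow> 'v \<Rightarrow> 'v \<Rightarrow> 'v set \<Rightarrow> real \<Rightarrow> vec \<Rightarrow> real \<Rightarrow> vec \<Rightarrow> 'v scm \<Rightarrow>
     (vec \<times> real \<times> ('v \<Rightarrow> vec)) measure \<times> (vec \<times> ('v \<Rightarrow> vec)) measure" where
  "obs X Y S Z d th d' th' M =
     (distr (Psel M S d' th') (XYZspace Z) (\<lambda>\<omega>. (\<omega> X, \<omega> Y 0, restrict \<omega> Z)),
      distr (Pdo M d th) (XZspace Z) (\<lambda>\<omega>. (\<omega> X, restrict \<omega> Z)))"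

end

theory Submission
  imports Defs
begin

definition KP :: "'a measure \<Rightarrow> 'b measure \<Rightarrow> ('a \<Rightarrow> 'b) \<Rightarrow> ('a \<Rightarrow> real) \<Rightarrow> ('b \<Rightarrow> real measure) \<Rightarrow> bool" where
 "KP P N W V Q \<longleftrightarrow> (\<forall>A\<in>sets borel. \<forall>B\<in>sets N. emeasure P {\<omega>\<in>space P. V \<omega> \<in> A \<and> W \<omega> \<in> B}
     = (\<integral>\<^sup>+\<omega>. indicator B (W \<omega>) * emeasure (Q (W \<omega>)) A \<partial>P))"

lemma Q_sets:
  assumes Q: "Q \<in> measurable N (subprob_algebra (borel::real measure))" and "x \<in> space N"
  shows "sets (Q x) = sets borel"
  using measurable_space[OF Q assms(2)] by (simp add: space_subprob_algebra)

lemma KP_nn: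
  fixes P :: "'a measure" and N :: "'b measure"
  assumes W: "W \<in> measurable P N" and V: "V \<in> borel_measurable P"
   and Q: "Q \<in> measurable N (subprob_algebra borel)" and kp: "KP P N W V Q"
   and f: "f \<in> borel_measurable (borel::real measure)" and B: "B \<in> sets N"
  shows "(\<integral>\<^sup>+\<omega>. indicator B (W \<omega>) * f (V \<omega>) \<partial>P) = (\<integral>\<^sup>+\<omega>. indicator B (W \<omega>) * (\<integral>\<^sup>+y. f y \<partial>Q (W \<omega>)) \<partial>P)"
proof -
  have mI: "(\<lambda>\<omega>. indicator B (W \<omega>) * g (V \<omega>)) \<in> borel_measurable P" if g: "g \<in> borel_measurable borel" for g :: "real \<Rightarrow> ennreal"
    by (intro borel_measurable_times_ennreal measurable_compose[OF W borel_measurable_indicator[OF B]] measurable_compose[OF V g])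
  have mK: "(\<lambda>\<omega>. indicator B (W \<omega>) * (\<integral>\<^sup>+y. g y \<partial>Q (W \<omega>))) \<in> borel_measurable P" if g: "g \<in> borel_measurable borel" for g :: "real \<Rightarrow> ennreal"
    by (intro borel_measurable_times_ennreal measurable_compose[OF W borel_measurable_indicator[OF B]] 
          measurable_compose[OF W measurable_compose[OF Q nn_integral_measurable_subprob_algebra[OF g]]])
  have Qm: "g \<in> borel_measurable (Q (W \<omega>))" if "\<omega> \<in> space P" "g \<in> borel_measurable borel" for g :: "real \<Rightarrow> ennreal" and \<omega>
  proof -
    have sQ: "sets (Q (W \<omega>)) = sets borel" by (rule Q_sets[OF Q measurable_space[OF W that(1)]])
    show ?thesis unfolding measurable_cong_sets[OF sQ refl] by (rule that(2))
  qed
  show ?thesis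
  using f
proof (induct rule: borel_measurable_induct)
  case (cong f g)
  then have "f = g" by auto
  then show ?case using cong by simp
next
  case (set A)
  have "(\<integral>\<^sup>+\<omega>. indicator B (W \<omega>) * indicator A (V \<omega>) \<partial>P)
      = (\<integral>\<^sup>+\<omega>. indicator {\<omega>\<in>space P. V \<omega> \<in> A \<and> W \<omega> \<in> B} \<omega> \<partial>P)"
    by (intro nn_integral_cong) (auto split: split_indicator)
  also have "\<dots> = emeasure P {\<omega>\<in>space P. V \<omega> \<in> A \<and> W \<omega> \<in> B}"
  proof (rule nn_integral_indicator)
    have "{\<omega>\<in>space P. V \<omega> \<in> A \<and> W \<omega> \<in> B} = (V -` A \<inter> space P) \<inter> (W -` B \<inter> space P)" by auto
    then show "{\<omega>\<in>space P. V \<omega> \<in> A \<and> W \<omega> \<in> B} \<in> sets P"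
      using measurable_sets[OF V set] measurable_sets[OF W B] by auto
  qed
  also have "\<dots> = (\<integral>\<^sup>+\<omega>. indicator B (W \<omega>) * emeasure (Q (W \<omega>)) A \<partial>P)"
    using kp set B unfolding KP_def by blast
  also have "\<dots> = (\<integral>\<^sup>+\<omega>. indicator B (W \<omega>) * (\<integral>\<^sup>+y. indicator A y \<partial>Q (W \<omega>)) \<partial>P)"
  proof (rule nn_integral_cong)
    fix \<omega> assume w: "\<omega> \<in> space P"
    have sQ: "sets (Q (W \<omega>)) = sets borel" by (rule Q_sets[OF Q measurable_space[OF W w]])
    have "(\<integral>\<^sup>+y. indicator A y \<partial>Q (W \<omega>)) = emeasure (Q (W \<omega>)) A"
      by (rule nn_integral_indicator) (simp add: sQ set)
    then show "indicator B (W \<omega>) * emeasure (Q (W \<omega>)) A = indicator B (W \<omega>) * (\<integral>\<^sup>+y. indicator A y \<partial>Q (W \<omega>))"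
      by simp
  qed
  finally show ?case .
next
  case (mult u c)
  have mu: "u \<in> borel_measurable borel" by (rule mult(2))
  note m1 = mI[OF mu] and m2 = mK[OF mu]
  have "(\<integral>\<^sup>+\<omega>. indicator B (W \<omega>) * (c * u (V \<omega>)) \<partial>P) = (\<integral>\<^sup>+\<omega>. c * (indicator B (W \<omega>) * u (V \<omega>)) \<partial>P)"
    by (rule nn_integral_cong) (rule mult.left_commute)
  also have "\<dots> = c * (\<integral>\<^sup>+\<omega>. indicator B (W \<omega>) * u (V \<omega>) \<partial>P)"
    by (rule nn_integral_cmult[OF m1])
  also have "\<dots> = c * (\<integral>\<^sup>+\<omega>. indicator B (W \<omega>) * (\<integral>\<^sup>+y. u y \<partial>Q (W \<omega>)) \<partial>P)"
    using mult(4) by (rule arg_cong)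
  also have "\<dots> = (\<integral>\<^sup>+\<omega>. c * (indicator B (W \<omega>) * (\<integral>\<^sup>+y. u y \<partial>Q (W \<omega>))) \<partial>P)"
    by (rule nn_integral_cmult[OF m2, symmetric])
  also have "\<dots> = (\<integral>\<^sup>+\<omega>. indicator B (W \<omega>) * (\<integral>\<^sup>+y. c * u y \<partial>Q (W \<omega>)) \<partial>P)"
  proof (rule nn_integral_cong)
    fix \<omega> assume "\<omega> \<in> space P"
    then have "u \<in> borel_measurable (Q (W \<omega>))" using mu by (rule Qm)
    then have eq: "(\<integral>\<^sup>+y. c * u y \<partial>Q (W \<omega>)) = c * (\<integral>\<^sup>+y. u y \<partial>Q (W \<omega>))" by (rule nn_integral_cmult)
    show "c * (indicator B (W \<omega>) * (\<integral>\<^sup>+y. u y \<partial>Q (W \<omega>))) = indicator B (W \<omega>) * (\<integral>\<^sup>+y. c * u y \<partial>Q (W \<omega>))"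
      unfolding eq by (rule mult.left_commute)
  qed
  finally show ?case .
next
  case (add u v)
  have mu: "u \<in> borel_measurable borel" "v \<in> borel_measurable borel" using add by simp_all
  note m1 = mI[OF mu(1)] mI[OF mu(2)] and m2 = mK[OF mu(1)] mK[OF mu(2)]
  have "(\<integral>\<^sup>+\<omega>. indicator B (W \<omega>) * (v (V \<omega>) + u (V \<omega>)) \<partial>P) = 
     (\<integral>\<^sup>+\<omega>. indicator B (W \<omega>) * v (V \<omega>) + indicator B (W \<omega>) * u (V \<omega>) \<partial>P)"
    by (simp add: distrib_left)
  also have "\<dots> = (\<integral>\<^sup>+\<omega>. indicator B (W \<omega>) * v (V \<omega>) \<partial>P) + (\<integral>\<^sup>+\<omega>. indicator B (W \<omega>) * u (V \<omega>) \<partial>P)"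
    by (rule nn_integral_add[OF m1(2) m1(1)])
  also have "\<dots> = (\<integral>\<^sup>+\<omega>. indicator B (W \<omega>) * (\<integral>\<^sup>+y. v y \<partial>Q (W \<omega>)) \<partial>P) + (\<integral>\<^sup>+\<omega>. indicator B (W \<omega>) * (\<integral>\<^sup>+y. u y \<partial>Q (W \<omega>)) \<partial>P)"
    using add(3) add(7) by simp
  also have "\<dots> = (\<integral>\<^sup>+\<omega>. indicator B (W \<omega>) * (\<integral>\<^sup>+y. v y \<partial>Q (W \<omega>)) + indicator B (W \<omega>) * (\<integral>\<^sup>+y. u y \<partial>Q (W \<omega>)) \<partial>P)"
    by (rule nn_integral_add[OF m2(2) m2(1), symmetric])
  also have "\<dots> = (\<integral>\<^sup>+\<omega>. indicator B (W \<omega>) * (\<integral>\<^sup>+y. v y + u y \<partial>Q (W \<omega>)) \<partial>P)"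
  proof (rule nn_integral_cong)
    fix \<omega> assume "\<omega> \<in> space P"
    then have "u \<in> borel_measurable (Q (W \<omega>))" "v \<in> borel_measurable (Q (W \<omega>))" using mu by (auto intro: Qm)
    then have "(\<integral>\<^sup>+y. v y + u y \<partial>Q (W \<omega>)) = (\<integral>\<^sup>+y. v y \<partial>Q (W \<omega>)) + (\<integral>\<^sup>+y. u y \<partial>Q (W \<omega>))"
      by (intro nn_integral_add)
    then show "indicator B (W \<omega>) * (\<integral>\<^sup>+y. v y \<partial>Q (W \<omega>)) + indicator B (W \<omega>) * (\<integral>\<^sup>+y. u y \<partial>Q (W \<omega>)) = indicator B (W \<omega>) * (\<integral>\<^sup>+y. v y + u y \<partial>Q (W \<omega>))"
      by (simp add: distrib_left)
  qed
  finally show ?case .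
next
  case (seq U)
  have mUb: "U i \<in> borel_measurable borel" for i using seq(1) .
  have mU: "U i \<in> borel_measurable (Q (W \<omega>))" if "\<omega> \<in> space P" for i \<omega>
    using that mUb by (rule Qm)
  have incU: "U i x \<le> U j x" if "i \<le> j" for i j x
    using seq(4) that unfolding incseq_def le_fun_def by blast
  have inc1: "incseq (\<lambda>i \<omega>. indicator B (W \<omega>) * U i (V \<omega>))"
    unfolding incseq_def le_fun_def by (intro allI impI mult_left_mono incU) auto
  have inc2: "incseq (\<lambda>i \<omega>. indicator B (W \<omega>) * (\<integral>\<^sup>+y. U i y \<partial>Q (W \<omega>)))"
    unfolding incseq_def le_fun_def by (intro allI impI mult_left_mono nn_integral_mono incU) auto
  have "(\<integral>\<^sup>+\<omega>. indicator B (W \<omega>) * (SUP i. U i) (V \<omega>) \<partial>P) = 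
     (\<integral>\<^sup>+\<omega>. (SUP i. indicator B (W \<omega>) * U i (V \<omega>)) \<partial>P)"
    by (intro nn_integral_cong) (simp only: SUP_apply SUP_mult_left_ennreal)
  also have "\<dots> = (SUP i. (\<integral>\<^sup>+\<omega>. indicator B (W \<omega>) * U i (V \<omega>) \<partial>P))"
    by (rule nn_integral_monotone_convergence_SUP[OF inc1 mI[OF mUb]])
  also have "\<dots> = (SUP i. (\<integral>\<^sup>+\<omega>. indicator B (W \<omega>) * (\<integral>\<^sup>+y. U i y \<partial>Q (W \<omega>)) \<partial>P))"
    using seq(3) by simp
  also have "\<dots> = (\<integral>\<^sup>+\<omega>. (SUP i. indicator B (W \<omega>) * (\<integral>\<^sup>+y. U i y \<partial>Q (W \<omega>))) \<partial>P)"
    by (rule nn_integral_monotone_convergence_SUP[OF inc2 mK[OF mUb], symmetric])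
  also have "\<dots> = (\<integral>\<^sup>+\<omega>. indicator B (W \<omega>) * (\<integral>\<^sup>+y. (SUP i. U i) y \<partial>Q (W \<omega>)) \<partial>P)"
  proof (rule nn_integral_cong)
    fix \<omega> assume w: "\<omega> \<in> space P"
    have "incseq U" by (rule seq(4))
    then have eq: "(\<integral>\<^sup>+y. (SUP i. U i y) \<partial>Q (W \<omega>)) = (SUP i. (\<integral>\<^sup>+y. U i y \<partial>Q (W \<omega>)))"
      by (rule nn_integral_monotone_convergence_SUP[OF _ mU[OF w]])
    show "(SUP i. indicator B (W \<omega>) * (\<integral>\<^sup>+y. U i y \<partial>Q (W \<omega>))) = indicator B (W \<omega>) * (\<integral>\<^sup>+y. (SUP i. U i) y \<partial>Q (W \<omega>))"
      by (simp only: SUP_apply eq SUP_mult_left_ennreal)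
  qed
  finally show ?case .
qed
qed

lemma int_ind:
  fixes f :: "'a \<Rightarrow> real"
  assumes W: "W \<in> measurable P N" and B: "B \<in> sets N" and f: "integrable P f"
  shows "integrable P (\<lambda>\<omega>. indicator B (W \<omega>) * f \<omega>)"
proof (rule Bochner_Integration.integrable_bound[OF f])
  show "(\<lambda>\<omega>. indicator B (W \<omega>) * f \<omega>) \<in> borel_measurable P"
    by (rule borel_measurable_times[OF measurable_compose[OF W borel_measurable_indicator[OF B]] borel_measurable_integrable[OF f]])
  show "AE x in P. norm (indicator B (W x) * f x) \<le> norm (f x)"
    by (auto split: split_indicator)
qed

lemma KP_half:
  fixes P :: "'a measure" and N :: "'b measure"
  assumes W: "W \<in> measurable P N" and V: "V \<in> borel_measurable P"
   and Q: "Q \<in> measurable N (subprob_algebra borel)" and kp: "KP P N W V Q"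
   and sm: "s \<in> borel_measurable borel" and iV: "integrable P (\<lambda>\<omega>. s (V \<omega>))"
  defines "Fp \<equiv> \<lambda>b. \<integral>\<^sup>+y. ennreal (s y) \<partial>Q b"
  shows "integrable P (\<lambda>\<omega>. enn2real (Fp (W \<omega>)))"
    and "\<And>B. B \<in> sets N \<Longrightarrow> (\<integral>\<omega>. indicator B (W \<omega>) * max (s (V \<omega>)) 0 \<partial>P) = (\<integral>\<omega>. indicator B (W \<omega>) * enn2real (Fp (W \<omega>)) \<partial>P)"
proof -
  have mE: "(\<lambda>y::real. ennreal (s y)) \<in> borel_measurable borel" by (rule measurable_compose[OF sm measurable_ennreal])
  have sV: "(\<lambda>\<omega>. s (V \<omega>)) \<in> borel_measurable P" by (rule measurable_compose[OF V sm])
  have mF: "(\<lambda>\<omega>. Fp (W \<omega>)) \<in> borel_measurable P"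
    unfolding Fp_def by (rule measurable_compose[OF W measurable_compose[OF Q nn_integral_measurable_subprob_algebra[OF mE]]])
  have key: "(\<integral>\<^sup>+\<omega>. indicator B (W \<omega>) * ennreal (s (V \<omega>)) \<partial>P) = (\<integral>\<^sup>+\<omega>. indicator B (W \<omega>) * Fp (W \<omega>) \<partial>P)"
    if B: "B \<in> sets N" for B
    unfolding Fp_def by (rule KP_nn[OF W V Q kp mE B])
  have "(\<integral>\<^sup>+\<omega>. Fp (W \<omega>) \<partial>P) = (\<integral>\<^sup>+\<omega>. indicator (space N) (W \<omega>) * Fp (W \<omega>) \<partial>P)"
    using measurable_space[OF W] by (intro nn_integral_cong) simp
  also have "\<dots> = (\<integral>\<^sup>+\<omega>. indicator (space N) (W \<omega>) * ennreal (s (V \<omega>)) \<partial>P)"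
    using key[OF sets.top] by simp
  also have "\<dots> \<le> (\<integral>\<^sup>+\<omega>. ennreal (norm (s (V \<omega>))) \<partial>P)"
    by (intro nn_integral_mono) (auto split: split_indicator intro: ennreal_leI)
  also have "\<dots> < \<infinity>" using iV by (simp add: integrable_iff_bounded)
  finally have finF: "(\<integral>\<^sup>+\<omega>. Fp (W \<omega>) \<partial>P) < \<infinity>" .
  then have aeF: "AE \<omega> in P. Fp (W \<omega>) \<noteq> \<infinity>"
    by (intro nn_integral_PInf_AE[OF mF]) simp
  have mR: "(\<lambda>\<omega>. enn2real (Fp (W \<omega>))) \<in> borel_measurable P"
    by (rule borel_measurable_enn2real[OF mF])
  show iR: "integrable P (\<lambda>\<omega>. enn2real (Fp (W \<omega>)))"
    unfolding integrable_iff_bounded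
  proof (intro conjI mR)
    have "(\<integral>\<^sup>+\<omega>. ennreal (norm (enn2real (Fp (W \<omega>)))) \<partial>P) \<le> (\<integral>\<^sup>+\<omega>. Fp (W \<omega>) \<partial>P)"
      by (intro nn_integral_mono) (simp add: ennreal_enn2real_if)
    then show "(\<integral>\<^sup>+\<omega>. ennreal (norm (enn2real (Fp (W \<omega>)))) \<partial>P) < \<infinity>"
      using finF by (rule le_less_trans)
  qed
  fix B assume B: "B \<in> sets N"
  have mB: "(\<lambda>\<omega>. indicator B (W \<omega>) :: real) \<in> borel_measurable P"
    by (rule measurable_compose[OF W borel_measurable_indicator[OF B]])
  have "(\<integral>\<omega>. indicator B (W \<omega>) * max (s (V \<omega>)) 0 \<partial>P) = enn2real (\<integral>\<^sup>+\<omega>. ennreal (indicator B (W \<omega>) * max (s (V \<omega>)) 0) \<partial>P)"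
    by (rule integral_eq_nn_integral) (rule borel_measurable_times[OF mB borel_measurable_max[OF borel_measurable_const sV]], simp)
  also have "(\<integral>\<^sup>+\<omega>. ennreal (indicator B (W \<omega>) * max (s (V \<omega>)) 0) \<partial>P) = (\<integral>\<^sup>+\<omega>. indicator B (W \<omega>) * ennreal (s (V \<omega>)) \<partial>P)"
    by (intro nn_integral_cong) (auto split: split_indicator simp: max_def ennreal_neg)
  also have "\<dots> = (\<integral>\<^sup>+\<omega>. indicator B (W \<omega>) * Fp (W \<omega>) \<partial>P)" by (rule key[OF B])
  also have "enn2real \<dots> = (\<integral>\<omega>. indicator B (W \<omega>) * enn2real (Fp (W \<omega>)) \<partial>P)"
  proof (rule enn2real_nn_integral_eq_integral)
    show "AE x in P. indicator B (W x) * Fp (W x) = ennreal (indicator B (W x) * enn2real (Fp (W x)))"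
      using aeF by eventually_elim (auto split: split_indicator simp: less_top)
    show "AE x in P. 0 \<le> indicator B (W x) * enn2real (Fp (W x))" by simp
    show "(\<lambda>x. indicator B (W x) * enn2real (Fp (W x))) \<in> borel_measurable P"
      by (intro borel_measurable_times mB mR)
  qed
  finally show "(\<integral>\<omega>. indicator B (W \<omega>) * max (s (V \<omega>)) 0 \<partial>P) = (\<integral>\<omega>. indicator B (W \<omega>) * enn2real (Fp (W \<omega>)) \<partial>P)" .
qed

lemma KP_real:
  fixes P :: "'a measure" and N :: "'b measure"
  assumes W: "W \<in> measurable P N" and V: "V \<in> borel_measurable P"
   and Q: "Q \<in> measurable N (subprob_algebra borel)" and kp: "KP P N W V Q"
   and iV: "integrable P V"
  defines "m \<equiv> \<lambda>b. enn2real (\<integral>\<^sup>+y. ennreal y \<partial>Q b) - enn2real (\<integral>\<^sup>+y. ennreal (- y) \<partial>Q b)"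
  shows "integrable P (\<lambda>\<omega>. m (W \<omega>))"
    and "\<And>B. B \<in> sets N \<Longrightarrow> (\<integral>\<omega>. indicator B (W \<omega>) * V \<omega> \<partial>P) = (\<integral>\<omega>. indicator B (W \<omega>) * m (W \<omega>) \<partial>P)"
proof -
  have s1: "(\<lambda>y::real. y) \<in> borel_measurable borel" by (rule measurable_ident_sets) simp
  have s2: "(\<lambda>y::real. - y) \<in> borel_measurable borel" by (rule borel_measurable_uminus[OF s1])
  have iV2: "integrable P (\<lambda>\<omega>. - V \<omega>)" using iV by (rule Bochner_Integration.integrable_minus)
  note H1 = KP_half[OF W V Q kp s1 iV]
  note H2 = KP_half[OF W V Q kp s2 iV2]
  have ip: "integrable P (\<lambda>\<omega>. enn2real (\<integral>\<^sup>+y. ennreal y \<partial>Q (W \<omega>)))" by (rule H1(1))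
  have in2: "integrable P (\<lambda>\<omega>. enn2real (\<integral>\<^sup>+y. ennreal (- y) \<partial>Q (W \<omega>)))" by (rule H2(1))
  show "integrable P (\<lambda>\<omega>. m (W \<omega>))" unfolding m_def by (rule Bochner_Integration.integrable_diff[OF ip in2])
  fix B assume B: "B \<in> sets N"
  have a1: "integrable P (\<lambda>\<omega>. indicator B (W \<omega>) * max (V \<omega>) 0)"
    by (rule int_ind[OF W B Bochner_Integration.integrable_max[OF iV integrable_zero]])
  have a2: "integrable P (\<lambda>\<omega>. indicator B (W \<omega>) * max (- V \<omega>) 0)"
    by (rule int_ind[OF W B Bochner_Integration.integrable_max[OF iV2 integrable_zero]])
  have b1: "integrable P (\<lambda>\<omega>. indicator B (W \<omega>) * enn2real (\<integral>\<^sup>+y. ennreal y \<partial>Q (W \<omega>)))"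
    by (rule int_ind[OF W B ip])
  have b2: "integrable P (\<lambda>\<omega>. indicator B (W \<omega>) * enn2real (\<integral>\<^sup>+y. ennreal (- y) \<partial>Q (W \<omega>)))"
    by (rule int_ind[OF W B in2])
  have "(\<integral>\<omega>. indicator B (W \<omega>) * V \<omega> \<partial>P) = 
     (\<integral>\<omega>. indicator B (W \<omega>) * max (V \<omega>) 0 - indicator B (W \<omega>) * max (- V \<omega>) 0 \<partial>P)"
    by (rule Bochner_Integration.integral_cong[OF refl]) (simp add: max_def right_diff_distrib[symmetric])
  also have "\<dots> = (\<integral>\<omega>. indicator B (W \<omega>) * max (V \<omega>) 0 \<partial>P) - (\<integral>\<omega>. indicator B (W \<omega>) * max (- V \<omega>) 0 \<partial>P)"
    by (rule Bochner_Integration.integral_diff[OF a1 a2])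
  also have "\<dots> = (\<integral>\<omega>. indicator B (W \<omega>) * enn2real (\<integral>\<^sup>+y. ennreal y \<partial>Q (W \<omega>)) \<partial>P)
     - (\<integral>\<omega>. indicator B (W \<omega>) * enn2real (\<integral>\<^sup>+y. ennreal (- y) \<partial>Q (W \<omega>)) \<partial>P)"
    using H1(2)[OF B] H2(2)[OF B] by simp
  also have "\<dots> = (\<integral>\<omega>. indicator B (W \<omega>) * enn2real (\<integral>\<^sup>+y. ennreal y \<partial>Q (W \<omega>)) - 
       indicator B (W \<omega>) * enn2real (\<integral>\<^sup>+y. ennreal (- y) \<partial>Q (W \<omega>)) \<partial>P)"
    by (rule Bochner_Integration.integral_diff[OF b1 b2, symmetric])
  also have "\<dots> = (\<integral>\<omega>. indicator B (W \<omega>) * m (W \<omega>) \<partial>P)"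
    unfolding m_def by (rule Bochner_Integration.integral_cong[OF refl]) (simp add: right_diff_distrib)
  finally show "(\<integral>\<omega>. indicator B (W \<omega>) * V \<omega> \<partial>P) = (\<integral>\<omega>. indicator B (W \<omega>) * m (W \<omega>) \<partial>P)" .
qed

lemma singleton_vspace: "{v \<in> space vspace. v = c} \<in> sets vspace"
proof -
  have "{v \<in> space vspace. v = c} = {v \<in> space vspace. \<forall>i. v i = c i}" by auto
  also have "\<dots> \<in> sets vspace" unfolding vspace_def by measurable
  finally show ?thesis .
qed

lemma meas_basic:
  assumes sP: "sets P = sets (PiM E (\<lambda>_. vspace))" and "X \<in> E" "Y \<in> E" "S \<in> E" "Z \<subseteq> E"
  shows "(\<lambda>\<omega>. (\<omega> X, restrict \<omega> Z)) \<in> measurable P (XZspace Z)"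
    and "(\<lambda>\<omega>. \<omega> Y 0) \<in> borel_measurable P"
    and "(\<lambda>\<omega>. \<omega> S) \<in> measurable P vspace"
    and "(\<lambda>\<omega>. \<omega> X) \<in> measurable P vspace"
    and "(\<lambda>\<omega>. (\<omega> X, restrict \<omega> Z, \<omega> S)) \<in> measurable P (XZSspace Z)"
proof -
  have cX: "(\<lambda>\<omega>. \<omega> X) \<in> measurable (PiM E (\<lambda>_. vspace)) vspace"
    using measurable_component_singleton[OF assms(2), of "\<lambda>_. vspace"] by simp
  have cS: "(\<lambda>\<omega>. \<omega> S) \<in> measurable (PiM E (\<lambda>_. vspace)) vspace"
    using measurable_component_singleton[OF assms(4), of "\<lambda>_. vspace"] by simp
  have cY: "(\<lambda>\<omega>. \<omega> Y) \<in> measurable (PiM E (\<lambda>_. vspace)) vspace"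
    using measurable_component_singleton[OF assms(3), of "\<lambda>_. vspace"] by simp
  have c0: "(\<lambda>v::vec. v 0) \<in> borel_measurable vspace"
    unfolding vspace_def using measurable_component_singleton[of 0 UNIV "\<lambda>_. borel"] by simp
  have cZ: "(\<lambda>\<omega>. restrict \<omega> Z) \<in> measurable (PiM E (\<lambda>_. vspace)) (PiM Z (\<lambda>_. vspace))"
    by (rule measurable_restrict_subset[OF assms(5)])
  note mc = measurable_cong_sets[OF sP refl]
  show "(\<lambda>\<omega>. (\<omega> X, restrict \<omega> Z)) \<in> measurable P (XZspace Z)"
    unfolding mc XZspace_def by (rule measurable_Pair[OF cX cZ])
  show "(\<lambda>\<omega>. \<omega> Y 0) \<in> borel_measurable P"
    unfolding mc by (rule measurable_compose[OF cY c0])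
  show "(\<lambda>\<omega>. \<omega> S) \<in> measurable P vspace" unfolding mc by (rule cS)
  show "(\<lambda>\<omega>. \<omega> X) \<in> measurable P vspace" unfolding mc by (rule cX)
  show "(\<lambda>\<omega>. (\<omega> X, restrict \<omega> Z, \<omega> S)) \<in> measurable P (XZSspace Z)"
    unfolding mc XZSspace_def by (rule measurable_Pair[OF cX measurable_Pair[OF cZ cS]])
qed

lemma sets_Pdo: "sets (Pdo M d th) = sets (PiM (endo M) (\<lambda>_. vspace))"
  by (simp add: Pdo_def)

lemma sets_Psel: "sets (Psel M S d th) = sets (PiM (endo M) (\<lambda>_. vspace))"
  by (simp add: Psel_def Pdo_def)

lemma space_Psel: "space (Psel M S d th) = space (Pdo M d th)"
  by (simp add: Psel_def)

lemma finite_Pdo: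
  assumes "wf_scm M" shows "finite_measure (Pdo M d th)"
proof (rule finite_measureI)
  have ps: "prob_space (PiM (exo M) (pexo M))"
    using assms unfolding wf_scm_def by (intro prob_space_PiM) auto
  have "emeasure (Pdo M d th) (space (Pdo M d th)) \<le> emeasure (PiM (exo M) (pexo M)) (sol M d th -` space (Pdo M d th) \<inter> space (PiM (exo M) (pexo M)))"
    unfolding Pdo_def distr_def by (simp add: emeasure_measure_of_conv)
  also have "\<dots> \<le> emeasure (PiM (exo M) (pexo M)) (space (PiM (exo M) (pexo M)))" by (rule emeasure_space)
  also have "\<dots> = 1" using ps by (simp add: prob_space.emeasure_space_1)
  finally show "emeasure (Pdo M d th) (space (Pdo M d th)) \<noteq> \<infinity>" by (auto simp: top_unique)
qed

lemma trans_KP: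
  fixes M :: "'v scm"
  assumes X: "X \<in> endo M" and Y: "Y \<in> endo M" and S: "S \<in> endo M" and Z: "Z \<subseteq> endo M"
    and Qm: "Q \<in> measurable (XZspace Z) (prob_algebra (borel :: real measure))"
    and eq: "\<forall>d\<in>{0, 1}. \<forall>th\<in>Th. \<forall>A\<in>sets borel. \<forall>B\<in>sets (XZSspace Z).
          emeasure (Pdo M d th)
            {\<omega> \<in> space (Pdo M d th). \<omega> Y 0 \<in> A \<and> (\<omega> X, restrict \<omega> Z, \<omega> S) \<in> B}
          = (\<integral>\<^sup>+ \<omega>. indicator B (\<omega> X, restrict \<omega> Z, \<omega> S) *
                     emeasure (Q (\<omega> X, restrict \<omega> Z)) A \<partial>Pdo M d th)"
    and d: "d \<in> {0,1}" and th: "th \<in> Th"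
  shows "KP (Pdo M d th) (XZspace Z) (\<lambda>\<omega>. (\<omega> X, restrict \<omega> Z)) (\<lambda>\<omega>. \<omega> Y 0) Q"
    and "KP (Psel M S d th) (XZspace Z) (\<lambda>\<omega>. (\<omega> X, restrict \<omega> Z)) (\<lambda>\<omega>. \<omega> Y 0) Q"
proof -
  let ?P = "Pdo M d th"
  note mb = meas_basic[OF sets_Pdo[of M d th] X Y S Z]
  have Qs: "Q \<in> measurable (XZspace Z) (subprob_algebra borel)" by (rule measurable_prob_algebraD[OF Qm])
  define f where "f = (\<lambda>t::vec \<times> ('v \<Rightarrow> vec) \<times> vec. (fst t, fst (snd t)))"
  have mf: "f \<in> measurable (XZSspace Z) (XZspace Z)"
    unfolding f_def XZSspace_def XZspace_def
    by (rule measurable_Pair[OF measurable_fst measurable_compose[OF measurable_snd measurable_fst]])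
  have tri_sp: "(\<omega> X, restrict \<omega> Z, \<omega> S) \<in> space (XZSspace Z)" if "\<omega> \<in> space ?P" for \<omega>
    by (rule measurable_space[OF mb(5) that])
  have mQA: "(\<lambda>\<omega>. indicator B (\<omega> X, restrict \<omega> Z) * emeasure (Q (\<omega> X, restrict \<omega> Z)) A) \<in> borel_measurable ?P"
    if A: "A \<in> sets borel" and B: "B \<in> sets (XZspace Z)" for A B
    by (intro borel_measurable_times_ennreal measurable_compose[OF mb(1) borel_measurable_indicator[OF B]]
          measurable_compose[OF mb(1) measurable_compose[OF Qs measurable_emeasure_subprob_algebra[OF A]]])
  show "KP ?P (XZspace Z) (\<lambda>\<omega>. (\<omega> X, restrict \<omega> Z)) (\<lambda>\<omega>. \<omega> Y 0) Q"
    unfolding KP_def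
  proof (intro ballI)
    fix A B assume A: "A \<in> sets (borel :: real measure)" and B: "B \<in> sets (XZspace Z)"
    define B' where "B' = f -` B \<inter> space (XZSspace Z)"
    have B': "B' \<in> sets (XZSspace Z)" unfolding B'_def by (rule measurable_sets[OF mf B])
    have "emeasure ?P {\<omega> \<in> space ?P. \<omega> Y 0 \<in> A \<and> (\<omega> X, restrict \<omega> Z) \<in> B}
        = emeasure ?P {\<omega> \<in> space ?P. \<omega> Y 0 \<in> A \<and> (\<omega> X, restrict \<omega> Z, \<omega> S) \<in> B'}"
      using tri_sp by (intro arg_cong[where f="emeasure ?P"]) (auto simp: B'_def f_def)
    also have "\<dots> = (\<integral>\<^sup>+ \<omega>. indicator B' (\<omega> X, restrict \<omega> Z, \<omega> S) * emeasure (Q (\<omega> X, restrict \<omega> Z)) A \<partial>?P)"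
      using eq d th A B' by blast
    also have "\<dots> = (\<integral>\<^sup>+ \<omega>. indicator B (\<omega> X, restrict \<omega> Z) * emeasure (Q (\<omega> X, restrict \<omega> Z)) A \<partial>?P)"
      using tri_sp by (intro nn_integral_cong) (auto simp: B'_def f_def split: split_indicator)
    finally show "emeasure ?P {\<omega> \<in> space ?P. \<omega> Y 0 \<in> A \<and> (\<omega> X, restrict \<omega> Z) \<in> B}
        = (\<integral>\<^sup>+ \<omega>. indicator B (\<omega> X, restrict \<omega> Z) * emeasure (Q (\<omega> X, restrict \<omega> Z)) A \<partial>?P)" .
  qed
  show "KP (Psel M S d th) (XZspace Z) (\<lambda>\<omega>. (\<omega> X, restrict \<omega> Z)) (\<lambda>\<omega>. \<omega> Y 0) Q"
    unfolding KP_def space_Psel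
  proof (intro ballI)
    fix A B assume A: "A \<in> sets (borel :: real measure)" and B: "B \<in> sets (XZspace Z)"
    define C where "C = {\<omega> \<in> space ?P. \<omega> S = enc 1}"
    have C: "C \<in> sets ?P"
    proof -
      have "C = (\<lambda>\<omega>. \<omega> S) -` {v \<in> space vspace. v = enc 1} \<inter> space ?P"
        unfolding C_def using measurable_space[OF mb(3)] by auto
      then show ?thesis using measurable_sets[OF mb(3) singleton_vspace] by simp
    qed
    define E where "E = {\<omega> \<in> space ?P. \<omega> Y 0 \<in> A \<and> (\<omega> X, restrict \<omega> Z) \<in> B}"
    have E: "E \<in> sets ?P"
    proof -
      have "E = ((\<lambda>\<omega>. \<omega> Y 0) -` A \<inter> space ?P) \<inter> ((\<lambda>\<omega>. (\<omega> X, restrict \<omega> Z)) -` B \<inter> space ?P)"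
        unfolding E_def by auto
      then show ?thesis using measurable_sets[OF mb(2) A] measurable_sets[OF mb(1) B] by auto
    qed
    define B'' where "B'' = (f -` B \<inter> space (XZSspace Z)) \<inter> ((\<lambda>t. snd (snd t)) -` {v \<in> space vspace. v = enc 1} \<inter> space (XZSspace Z))"
    have mss: "(\<lambda>t::vec \<times> ('v \<Rightarrow> vec) \<times> vec. snd (snd t)) \<in> measurable (XZSspace Z) vspace"
      unfolding XZSspace_def by (rule measurable_compose[OF measurable_snd measurable_snd])
    have B'': "B'' \<in> sets (XZSspace Z)" unfolding B''_def
      by (intro sets.Int measurable_sets[OF mf B] measurable_sets[OF mss singleton_vspace])
    have sP: "sets (Psel M S d th) = sets ?P" by (simp add: Psel_def)
    have "emeasure (Psel M S d th) E = emeasure ?P (C \<inter> E) / emeasure ?P C"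
      unfolding Psel_def C_def[symmetric] by (rule emeasure_uniform_measure[OF C E])
    also have "C \<inter> E = {\<omega> \<in> space ?P. \<omega> Y 0 \<in> A \<and> (\<omega> X, restrict \<omega> Z, \<omega> S) \<in> B''}"
      using tri_sp measurable_space[OF mb(3)] by (auto simp: C_def E_def B''_def f_def)
    also have "emeasure ?P \<dots> = (\<integral>\<^sup>+ \<omega>. indicator B'' (\<omega> X, restrict \<omega> Z, \<omega> S) * emeasure (Q (\<omega> X, restrict \<omega> Z)) A \<partial>?P)"
      using eq d th A B'' by blast
    also have "\<dots> = (\<integral>\<^sup>+ \<omega>. indicator B (\<omega> X, restrict \<omega> Z) * emeasure (Q (\<omega> X, restrict \<omega> Z)) A * indicator C \<omega> \<partial>?P)"
    proof (rule nn_integral_cong)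
      fix \<omega> assume w: "\<omega> \<in> space ?P"
      have t1: "(\<omega> X, restrict \<omega> Z, \<omega> S) \<in> space (XZSspace Z)" by (rule tri_sp[OF w])
      have t2: "\<omega> S \<in> space vspace" by (rule measurable_space[OF mb(3) w])
      have "indicator B'' (\<omega> X, restrict \<omega> Z, \<omega> S) = (indicator B (\<omega> X, restrict \<omega> Z) * indicator C \<omega> :: ennreal)"
        using t1 t2 w by (auto simp: B''_def C_def f_def split: split_indicator)
      then show "indicator B'' (\<omega> X, restrict \<omega> Z, \<omega> S) * emeasure (Q (\<omega> X, restrict \<omega> Z)) A = indicator B (\<omega> X, restrict \<omega> Z) * emeasure (Q (\<omega> X, restrict \<omega> Z)) A * indicator C \<omega>"
        by (simp add: ac_simps)
    qed
    also have "\<dots> / emeasure ?P C = (\<integral>\<^sup>+ \<omega>. indicator B (\<omega> X, restrict \<omega> Z) * emeasure (Q (\<omega> X, restrict \<omega> Z)) A \<partial>Psel M S d th)"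
      unfolding Psel_def C_def[symmetric] by (rule nn_integral_uniform_measure[OF mQA[OF A B] C, symmetric])
    finally show "emeasure (Psel M S d th) {\<omega> \<in> space ?P. \<omega> Y 0 \<in> A \<and> (\<omega> X, restrict \<omega> Z) \<in> B}
        = (\<integral>\<^sup>+ \<omega>. indicator B (\<omega> X, restrict \<omega> Z) * emeasure (Q (\<omega> X, restrict \<omega> Z)) A \<partial>Psel M S d th)"
      unfolding E_def .
  qed
qed

lemma SI:
  fixes f :: "'a \<Rightarrow> real"
  assumes W: "W \<in> measurable P N"
  shows "set_lebesgue_integral P (W -` B \<inter> space P) f = (\<integral>\<omega>. indicator B (W \<omega>) * f \<omega> \<partial>P)"
  unfolding set_lebesgue_integral_def
  by (rule Bochner_Integration.integral_cong[OF refl]) (auto split: split_indicator)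

lemma DI:
  fixes h :: "'b \<Rightarrow> real"
  assumes W: "W \<in> measurable P N" and h: "h \<in> borel_measurable N" and B: "B \<in> sets N"
  shows "(\<integral>\<omega>. indicator B (W \<omega>) * h (W \<omega>) \<partial>P) = (\<integral>x. indicator B x * h x \<partial>distr P N W)"
proof -
  have m: "(\<lambda>x. indicator B x * h x) \<in> borel_measurable N"
    by (rule borel_measurable_times[OF borel_measurable_indicator[OF B] h])
  show ?thesis by (rule integral_distr[OF W m, symmetric])
qed

lemma UQd:
  fixes ha hb :: "'b \<Rightarrow> real"
  assumes Wa: "Wa \<in> measurable Pa N" and Wb: "Wb \<in> measurable Pb N"
    and deq: "distr Pa N Wa = distr Pb N Wb"
    and ha: "ha \<in> borel_measurable N" and hb: "hb \<in> borel_measurable N"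
    and ia: "integrable Pa (\<lambda>\<omega>. ha (Wa \<omega>))" and ib: "integrable Pb (\<lambda>\<omega>. hb (Wb \<omega>))"
    and eq: "\<And>A. A \<in> sets N \<Longrightarrow> (\<integral>\<omega>. indicator A (Wa \<omega>) * ha (Wa \<omega>) \<partial>Pa) = (\<integral>\<omega>. indicator A (Wb \<omega>) * hb (Wb \<omega>) \<partial>Pb)"
  shows "AE x in distr Pa N Wa. ha x = hb x"
proof (rule density_unique_real)
  show "integrable (distr Pa N Wa) ha" using ia by (simp add: integrable_distr_eq[OF Wa ha])
  show "integrable (distr Pa N Wa) hb" unfolding deq using ib by (simp add: integrable_distr_eq[OF Wb hb])
  fix A assume "A \<in> sets (distr Pa N Wa)"
  then have A: "A \<in> sets N" by simp
  have "set_lebesgue_integral (distr Pa N Wa) A ha = (\<integral>x. indicator A x * ha x \<partial>distr Pa N Wa)"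
    by (simp add: set_lebesgue_integral_def)
  also have "\<dots> = (\<integral>\<omega>. indicator A (Wa \<omega>) * ha (Wa \<omega>) \<partial>Pa)" by (rule DI[OF Wa ha A, symmetric])
  also have "\<dots> = (\<integral>\<omega>. indicator A (Wb \<omega>) * hb (Wb \<omega>) \<partial>Pb)" by (rule eq[OF A])
  also have "\<dots> = (\<integral>x. indicator A x * hb x \<partial>distr Pb N Wb)" by (rule DI[OF Wb hb A])
  also have "\<dots> = set_lebesgue_integral (distr Pa N Wa) A hb"
    unfolding deq by (simp add: set_lebesgue_integral_def)
  finally show "set_lebesgue_integral (distr Pa N Wa) A ha = set_lebesgue_integral (distr Pa N Wa) A hb" .
qed

lemma NNU:
  fixes f1 f2 :: "'b \<Rightarrow> ennreal"
  assumes fm: "finite_measure \<mu>" and f1: "f1 \<in> borel_measurable \<mu>" and f2: "f2 \<in> borel_measurable \<mu>"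
    and eq: "\<And>B. B \<in> sets \<mu> \<Longrightarrow> (\<integral>\<^sup>+x. indicator B x * f1 x \<partial>\<mu>) = (\<integral>\<^sup>+x. indicator B x * f2 x \<partial>\<mu>)"
  shows "AE x in \<mu>. f1 x = f2 x"
proof -
  interpret finite_measure \<mu> by (rule fm)
  have "density \<mu> f1 = density \<mu> f2"
  proof (rule measure_eqI)
    show "sets (density \<mu> f1) = sets (density \<mu> f2)" by simp
    fix A assume "A \<in> sets (density \<mu> f1)"
    then have A: "A \<in> sets \<mu>" by simp
    have "emeasure (density \<mu> f1) A = (\<integral>\<^sup>+x. f1 x * indicator A x \<partial>\<mu>)" by (rule emeasure_density[OF f1 A])
    also have "\<dots> = (\<integral>\<^sup>+x. indicator A x * f1 x \<partial>\<mu>)" by (simp add: mult.commute)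
    also have "\<dots> = (\<integral>\<^sup>+x. indicator A x * f2 x \<partial>\<mu>)" by (rule eq[OF A])
    also have "\<dots> = (\<integral>\<^sup>+x. f2 x * indicator A x \<partial>\<mu>)" by (simp add: mult.commute)
    also have "\<dots> = emeasure (density \<mu> f2) A" by (rule emeasure_density[OF f2 A, symmetric])
    finally show "emeasure (density \<mu> f1) A = emeasure (density \<mu> f2) A" .
  qed
  then show ?thesis by (rule density_unique[OF f1 f2])
qed

lemma finite_Psel:
  assumes "wf_scm M" "S \<in> endo M" shows "finite_measure (Psel M S d th)"
proof -
  interpret F: finite_measure "Pdo M d th" by (rule finite_Pdo[OF assms(1)])
  define C where "C = {\<omega> \<in> space (Pdo M d th). \<omega> S = enc 1}"
  have mS: "(\<lambda>\<omega>. \<omega> S) \<in> measurable (Pdo M d th) vspace"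
    unfolding measurable_cong_sets[OF sets_Pdo refl]
    using measurable_component_singleton[OF assms(2), of "\<lambda>_. vspace"] by simp
  have C: "C \<in> sets (Pdo M d th)"
  proof -
    have "C = (\<lambda>\<omega>. \<omega> S) -` {v \<in> space vspace. v = enc 1} \<inter> space (Pdo M d th)"
      unfolding C_def using measurable_space[OF mS] by auto
    then show ?thesis using measurable_sets[OF mS singleton_vspace] by simp
  qed
  show ?thesis
  proof (rule finite_measureI)
    have "emeasure (Psel M S d th) (space (Psel M S d th)) = emeasure (Pdo M d th) (C \<inter> space (Pdo M d th)) / emeasure (Pdo M d th) C"
      unfolding Psel_def C_def[symmetric] space_uniform_measure by (rule emeasure_uniform_measure[OF C sets.top])
    also have "\<dots> = emeasure (Pdo M d th) C / emeasure (Pdo M d th) C"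
      using sets.sets_into_space[OF C] by (simp add: Int_absorb2)
    also have "\<dots> \<noteq> \<infinity>"
    proof (cases "emeasure (Pdo M d th) C = 0")
      case False
      have "emeasure (Pdo M d th) C < \<top>" by (meson F.emeasure_finite top.not_eq_extremum)
      then show ?thesis using ennreal_divide_self[OF False] by simp
    qed simp
    finally show "emeasure (Psel M S d th) (space (Psel M S d th)) \<noteq> \<infinity>" .
  qed
qed

lemma mm_meas:
  assumes Qs: "Q \<in> measurable N (subprob_algebra (borel :: real measure))"
  shows "(\<lambda>b. enn2real (\<integral>\<^sup>+y. ennreal y \<partial>Q b) - enn2real (\<integral>\<^sup>+y. ennreal (- y) \<partial>Q b)) \<in> borel_measurable N"
proof -
  have e1: "(\<lambda>y::real. ennreal y) \<in> borel_measurable borel" by simp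
  have e2: "(\<lambda>y::real. ennreal (- y)) \<in> borel_measurable borel" by simp
  show ?thesis
    by (intro borel_measurable_diff borel_measurable_enn2real
        measurable_compose[OF Qs nn_integral_measurable_subprob_algebra[OF e1]]
        measurable_compose[OF Qs nn_integral_measurable_subprob_algebra[OF e2]])
qed

lemma hyps_unfold:
  fixes M :: "'v scm"
  assumes "hyps Th X Yh Y S Z d th d' th' M"
  shows "wf_scm M" "X \<in> endo M" "Y \<in> endo M" "S \<in> endo M" "Z \<subseteq> endo M"
    "trans_ci M Th X Y S Z"
    "absolutely_continuous
       (distr (Psel M S d' th') (XZspace Z) (\<lambda>\<omega>. (\<omega> X, restrict \<omega> Z)))
       (distr (Pdo M d th) (XZspace Z) (\<lambda>\<omega>. (\<omega> X, restrict \<omega> Z)))"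
  using assms unfolding hyps_def in_class_def sel_setup_def by auto

lemma part2:
  fixes M :: "'v scm"
  assumes H: "hyps Th X Yh Y S Z d th d' th' M" and dd: "d \<in> {0,1}" "d' \<in> {0,1}" "th \<in> Th" "th' \<in> Th"
    and Gc: "is_cexp (Psel M S d' th') (\<lambda>\<omega>. (\<omega> X, restrict \<omega> Z)) (XZspace Z) (\<lambda>\<omega>. \<omega> Y 0) g"
    and Hc: "is_cexp (Pdo M d th) (\<lambda>\<omega>. \<omega> X) vspace (\<lambda>\<omega>. g (\<omega> X, restrict \<omega> Z)) h"
    and iY: "integrable (Pdo M d th) (\<lambda>\<omega>. \<omega> Y 0)"
  shows "is_cexp (Pdo M d th) (\<lambda>\<omega>. \<omega> X) vspace (\<lambda>\<omega>. \<omega> Y 0) h"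
proof -
  note hu = hyps_unfold[OF H]
  obtain Q where Qm: "Q \<in> measurable (XZspace Z) (prob_algebra (borel :: real measure))"
    and eq: "\<forall>d\<in>{0, 1}. \<forall>th\<in>Th. \<forall>A\<in>sets borel. \<forall>B\<in>sets (XZSspace Z).
          emeasure (Pdo M d th)
            {\<omega> \<in> space (Pdo M d th). \<omega> Y 0 \<in> A \<and> (\<omega> X, restrict \<omega> Z, \<omega> S) \<in> B}
          = (\<integral>\<^sup>+ \<omega>. indicator B (\<omega> X, restrict \<omega> Z, \<omega> S) *
                     emeasure (Q (\<omega> X, restrict \<omega> Z)) A \<partial>Pdo M d th)"
    using hu(6) unfolding trans_ci_def by blast
  have Qs: "Q \<in> measurable (XZspace Z) (subprob_algebra borel)" by (rule measurable_prob_algebraD[OF Qm])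
  note KPd = trans_KP(1)[OF hu(2,3,4,5) Qm eq dd(1) dd(3)]
  note KPs = trans_KP(2)[OF hu(2,3,4,5) Qm eq dd(2) dd(4)]
  note mbd = meas_basic[OF sets_Pdo[of M d th] hu(2,3,4,5)]
  note mbs = meas_basic[OF sets_Psel[of M S d' th'] hu(2,3,4,5)]
  define m where "m = (\<lambda>b. enn2real (\<integral>\<^sup>+y. ennreal y \<partial>Q b) - enn2real (\<integral>\<^sup>+y. ennreal (- y) \<partial>Q b))"
  have mm: "m \<in> borel_measurable (XZspace Z)" unfolding m_def by (rule mm_meas[OF Qs])
  have gm: "g \<in> borel_measurable (XZspace Z)" and iYs: "integrable (Psel M S d' th') (\<lambda>\<omega>. \<omega> Y 0)"
    and igs: "integrable (Psel M S d' th') (\<lambda>\<omega>. g (\<omega> X, restrict \<omega> Z))"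
    and eqG: "\<And>A. A \<in> sets (XZspace Z) \<Longrightarrow> set_lebesgue_integral (Psel M S d' th') ((\<lambda>\<omega>. (\<omega> X, restrict \<omega> Z)) -` A \<inter> space (Psel M S d' th')) (\<lambda>\<omega>. \<omega> Y 0)
                 = set_lebesgue_integral (Psel M S d' th') ((\<lambda>\<omega>. (\<omega> X, restrict \<omega> Z)) -` A \<inter> space (Psel M S d' th')) (\<lambda>\<omega>. g (\<omega> X, restrict \<omega> Z))"
    using Gc unfolding is_cexp_def by auto
  have RS1: "integrable (Psel M S d' th') (\<lambda>\<omega>. m (\<omega> X, restrict \<omega> Z))"
    unfolding m_def by (rule KP_real(1)[OF mbs(1) mbs(2) Qs KPs iYs])
  have RS2: "(\<integral>\<omega>. indicator B (\<omega> X, restrict \<omega> Z) * \<omega> Y 0 \<partial>Psel M S d' th') = (\<integral>\<omega>. indicator B (\<omega> X, restrict \<omega> Z) * m (\<omega> X, restrict \<omega> Z) \<partial>Psel M S d' th')"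
    if B: "B \<in> sets (XZspace Z)" for B
    unfolding m_def by (rule KP_real(2)[OF mbs(1) mbs(2) Qs KPs iYs B])
  have AEs: "AE x in distr (Psel M S d' th') (XZspace Z) (\<lambda>\<omega>. (\<omega> X, restrict \<omega> Z)). g x = m x"
  proof (rule UQd[OF mbs(1) mbs(1) refl gm mm igs RS1])
    fix A assume A: "A \<in> sets (XZspace Z)"
    have "(\<integral>\<omega>. indicator A (\<omega> X, restrict \<omega> Z) * g (\<omega> X, restrict \<omega> Z) \<partial>Psel M S d' th')
       = (\<integral>\<omega>. indicator A (\<omega> X, restrict \<omega> Z) * \<omega> Y 0 \<partial>Psel M S d' th')"
      using eqG[OF A] unfolding SI[OF mbs(1)] by simp
    also have "\<dots> = (\<integral>\<omega>. indicator A (\<omega> X, restrict \<omega> Z) * m (\<omega> X, restrict \<omega> Z) \<partial>Psel M S d' th')"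
      by (rule RS2[OF A])
    finally show "(\<integral>\<omega>. indicator A (\<omega> X, restrict \<omega> Z) * g (\<omega> X, restrict \<omega> Z) \<partial>Psel M S d' th')
       = (\<integral>\<omega>. indicator A (\<omega> X, restrict \<omega> Z) * m (\<omega> X, restrict \<omega> Z) \<partial>Psel M S d' th')" .
  qed
  have AEd': "AE x in distr (Pdo M d th) (XZspace Z) (\<lambda>\<omega>. (\<omega> X, restrict \<omega> Z)). g x = m x"
    by (rule absolutely_continuous_AE[OF _ hu(7) AEs]) simp
  have AEd: "AE \<omega> in Pdo M d th. g (\<omega> X, restrict \<omega> Z) = m (\<omega> X, restrict \<omega> Z)"
    using AEd' by (subst (asm) AE_distr_iff[OF mbd(1) borel_measurable_eq[OF gm mm]])
  have RD2: "(\<integral>\<omega>. indicator B (\<omega> X, restrict \<omega> Z) * \<omega> Y 0 \<partial>Pdo M d th) = (\<integral>\<omega>. indicator B (\<omega> X, restrict \<omega> Z) * m (\<omega> X, restrict \<omega> Z) \<partial>Pdo M d th)"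
    if B: "B \<in> sets (XZspace Z)" for B
    unfolding m_def by (rule KP_real(2)[OF mbd(1) mbd(2) Qs KPd iY B])
  have hm: "h \<in> borel_measurable vspace" and ih: "integrable (Pdo M d th) (\<lambda>\<omega>. h (\<omega> X))"
    and eqH: "\<And>A. A \<in> sets vspace \<Longrightarrow> set_lebesgue_integral (Pdo M d th) ((\<lambda>\<omega>. \<omega> X) -` A \<inter> space (Pdo M d th)) (\<lambda>\<omega>. g (\<omega> X, restrict \<omega> Z))
                 = set_lebesgue_integral (Pdo M d th) ((\<lambda>\<omega>. \<omega> X) -` A \<inter> space (Pdo M d th)) (\<lambda>\<omega>. h (\<omega> X))"
    using Hc unfolding is_cexp_def by auto
  show ?thesis unfolding is_cexp_def
  proof (intro conjI ballI mbd(4) hm iY ih)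
    fix A assume A: "A \<in> sets vspace"
    define B where "B = fst -` A \<inter> space (XZspace Z)"
    have B: "B \<in> sets (XZspace Z)" unfolding B_def XZspace_def
      by (rule measurable_sets[OF measurable_fst A[unfolded XZspace_def]])
    have indB: "indicator B (\<omega> X, restrict \<omega> Z) = (indicator A (\<omega> X) :: real)" if "\<omega> \<in> space (Pdo M d th)" for \<omega>
      using measurable_space[OF mbd(1) that] by (auto simp: B_def split: split_indicator)
    have mB: "(\<lambda>\<omega>. indicator B (\<omega> X, restrict \<omega> Z) :: real) \<in> borel_measurable (Pdo M d th)"
      by (rule measurable_compose[OF mbd(1) borel_measurable_indicator[OF B]])
    have "set_lebesgue_integral (Pdo M d th) ((\<lambda>\<omega>. \<omega> X) -` A \<inter> space (Pdo M d th)) (\<lambda>\<omega>. \<omega> Y 0)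
        = (\<integral>\<omega>. indicator A (\<omega> X) * \<omega> Y 0 \<partial>Pdo M d th)" by (rule SI[OF mbd(4)])
    also have "\<dots> = (\<integral>\<omega>. indicator B (\<omega> X, restrict \<omega> Z) * \<omega> Y 0 \<partial>Pdo M d th)"
      using indB by (intro Bochner_Integration.integral_cong) auto
    also have "\<dots> = (\<integral>\<omega>. indicator B (\<omega> X, restrict \<omega> Z) * m (\<omega> X, restrict \<omega> Z) \<partial>Pdo M d th)"
      by (rule RD2[OF B])
    also have "\<dots> = (\<integral>\<omega>. indicator B (\<omega> X, restrict \<omega> Z) * g (\<omega> X, restrict \<omega> Z) \<partial>Pdo M d th)"
    proof (rule integral_cong_AE)
      show "AE \<omega> in Pdo M d th. indicator B (\<omega> X, restrict \<omega> Z) * m (\<omega> X, restrict \<omega> Z) = indicator B (\<omega> X, restrict \<omega> Z) * g (\<omega> X, restrict \<omega> Z)"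
        using AEd by eventually_elim simp
    qed (auto intro!: borel_measurable_times mB measurable_compose[OF mbd(1) mm] measurable_compose[OF mbd(1) gm])
    also have "\<dots> = (\<integral>\<omega>. indicator A (\<omega> X) * g (\<omega> X, restrict \<omega> Z) \<partial>Pdo M d th)"
      using indB by (intro Bochner_Integration.integral_cong) auto
    also have "\<dots> = set_lebesgue_integral (Pdo M d th) ((\<lambda>\<omega>. \<omega> X) -` A \<inter> space (Pdo M d th)) (\<lambda>\<omega>. g (\<omega> X, restrict \<omega> Z))"
      by (rule SI[OF mbd(4), symmetric])
    also have "\<dots> = set_lebesgue_integral (Pdo M d th) ((\<lambda>\<omega>. \<omega> X) -` A \<inter> space (Pdo M d th)) (\<lambda>\<omega>. h (\<omega> X))"
      by (rule eqH[OF A])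
    finally show "set_lebesgue_integral (Pdo M d th) ((\<lambda>\<omega>. \<omega> X) -` A \<inter> space (Pdo M d th)) (\<lambda>\<omega>. \<omega> Y 0)
        = set_lebesgue_integral (Pdo M d th) ((\<lambda>\<omega>. \<omega> X) -` A \<inter> space (Pdo M d th)) (\<lambda>\<omega>. h (\<omega> X))" .
  qed
qed

lemma get_Q:
  fixes M :: "'v scm"
  assumes H: "hyps Th X Yh Y S Z d th d' th' M" and dd: "d \<in> {0,1}" "d' \<in> {0,1}" "th \<in> Th" "th' \<in> Th"
  obtains Q where "Q \<in> measurable (XZspace Z) (subprob_algebra borel)"
    "KP (Pdo M d th) (XZspace Z) (\<lambda>\<omega>. (\<omega> X, restrict \<omega> Z)) (\<lambda>\<omega>. \<omega> Y 0) Q"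
    "KP (Psel M S d' th') (XZspace Z) (\<lambda>\<omega>. (\<omega> X, restrict \<omega> Z)) (\<lambda>\<omega>. \<omega> Y 0) Q"
proof -
  note hu = hyps_unfold[OF H]
  obtain Q where Qm: "Q \<in> measurable (XZspace Z) (prob_algebra (borel :: real measure))"
    and eq: "\<forall>d\<in>{0, 1}. \<forall>th\<in>Th. \<forall>A\<in>sets borel. \<forall>B\<in>sets (XZSspace Z).
          emeasure (Pdo M d th)
            {\<omega> \<in> space (Pdo M d th). \<omega> Y 0 \<in> A \<and> (\<omega> X, restrict \<omega> Z, \<omega> S) \<in> B}
          = (\<integral>\<^sup>+ \<omega>. indicator B (\<omega> X, restrict \<omega> Z, \<omega> S) *
                     emeasure (Q (\<omega> X, restrict \<omega> Z)) A \<partial>Pdo M d th)"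
    using hu(6) unfolding trans_ci_def by blast
  show ?thesis
    by (rule that[OF measurable_prob_algebraD[OF Qm] trans_KP(1)[OF hu(2,3,4,5) Qm eq dd(1) dd(3)]
        trans_KP(2)[OF hu(2,3,4,5) Qm eq dd(2) dd(4)]])
qed

lemma sel_chain:
  fixes M :: "'v scm" and s :: "real \<Rightarrow> real"
  assumes X: "X \<in> endo M" and Y: "Y \<in> endo M" and S: "S \<in> endo M" and Z: "Z \<subseteq> endo M"
    and Qs: "Q \<in> measurable (XZspace Z) (subprob_algebra borel)"
    and KPs: "KP (Psel M S d' th') (XZspace Z) (\<lambda>\<omega>. (\<omega> X, restrict \<omega> Z)) (\<lambda>\<omega>. \<omega> Y 0) Q"
    and sm: "s \<in> borel_measurable borel" and B: "B \<in> sets (XZspace Z)"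
  shows "(\<integral>\<^sup>+x. indicator B x * (\<integral>\<^sup>+y. ennreal (s y) \<partial>Q x) \<partial>distr (Psel M S d' th') (XZspace Z) (\<lambda>\<omega>. (\<omega> X, restrict \<omega> Z)))
       = (\<integral>\<^sup>+t. indicator B (fst t, snd (snd t)) * ennreal (s (fst (snd t))) \<partial>distr (Psel M S d' th') (XYZspace Z) (\<lambda>\<omega>. (\<omega> X, \<omega> Y 0, restrict \<omega> Z)))"
proof -
  note mbs = meas_basic[OF sets_Psel[of M S d' th'] X Y S Z]
  have mz: "(\<lambda>\<omega>. restrict \<omega> Z) \<in> measurable (Psel M S d' th') (PiM Z (\<lambda>_. vspace))"
    using measurable_compose[OF mbs(1)[unfolded XZspace_def] measurable_snd] by simp
  have mxyz: "(\<lambda>\<omega>. (\<omega> X, \<omega> Y 0, restrict \<omega> Z)) \<in> measurable (Psel M S d' th') (XYZspace Z)"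
    unfolding XYZspace_def by (rule measurable_Pair[OF mbs(4) measurable_Pair[OF mbs(2) mz]])
  have mE: "(\<lambda>y::real. ennreal (s y)) \<in> borel_measurable borel" by (rule measurable_compose[OF sm measurable_ennreal])
  have mp: "(\<lambda>t::vec \<times> real \<times> ('v \<Rightarrow> vec). (fst t, snd (snd t))) \<in> measurable (XYZspace Z) (XZspace Z)"
    unfolding XYZspace_def XZspace_def
    by (rule measurable_Pair[OF measurable_fst measurable_compose[OF measurable_snd measurable_snd]])
  have ms: "(\<lambda>t::vec \<times> real \<times> ('v \<Rightarrow> vec). fst (snd t)) \<in> borel_measurable (XYZspace Z)"
    unfolding XYZspace_def by (rule measurable_compose[OF measurable_snd measurable_fst])
  have f1: "(\<lambda>x. indicator B x * (\<integral>\<^sup>+y. ennreal (s y) \<partial>Q x)) \<in> borel_measurable (XZspace Z)"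
    by (intro borel_measurable_times_ennreal borel_measurable_indicator[OF B]
          measurable_compose[OF Qs nn_integral_measurable_subprob_algebra[OF mE]])
  have f2: "(\<lambda>t. indicator B (fst t, snd (snd t)) * ennreal (s (fst (snd t)))) \<in> borel_measurable (XYZspace Z)"
    by (intro borel_measurable_times_ennreal measurable_compose[OF mp borel_measurable_indicator[OF B]]
          measurable_compose[OF ms mE])
  have "(\<integral>\<^sup>+x. indicator B x * (\<integral>\<^sup>+y. ennreal (s y) \<partial>Q x) \<partial>distr (Psel M S d' th') (XZspace Z) (\<lambda>\<omega>. (\<omega> X, restrict \<omega> Z)))
      = (\<integral>\<^sup>+\<omega>. indicator B (\<omega> X, restrict \<omega> Z) * (\<integral>\<^sup>+y. ennreal (s y) \<partial>Q (\<omega> X, restrict \<omega> Z)) \<partial>Psel M S d' th')"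
    by (rule nn_integral_distr[OF mbs(1)]) (simp add: f1)
  also have "\<dots> = (\<integral>\<^sup>+\<omega>. indicator B (\<omega> X, restrict \<omega> Z) * ennreal (s (\<omega> Y 0)) \<partial>Psel M S d' th')"
    by (rule KP_nn[OF mbs(1) mbs(2) Qs KPs mE B, symmetric])
  also have "\<dots> = (\<integral>\<^sup>+t. indicator B (fst t, snd (snd t)) * ennreal (s (fst (snd t))) \<partial>distr (Psel M S d' th') (XYZspace Z) (\<lambda>\<omega>. (\<omega> X, \<omega> Y 0, restrict \<omega> Z)))"
    by (subst nn_integral_distr[OF mxyz]) (simp_all add: f2)
  finally show ?thesis .
qed

lemma pdo_chain:
  fixes M :: "'v scm"
  assumes X: "X \<in> endo M" and Y: "Y \<in> endo M" and S: "S \<in> endo M" and Z: "Z \<subseteq> endo M"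
    and Qs: "Q \<in> measurable (XZspace Z) (subprob_algebra borel)"
    and KPd: "KP (Pdo M d th) (XZspace Z) (\<lambda>\<omega>. (\<omega> X, restrict \<omega> Z)) (\<lambda>\<omega>. \<omega> Y 0) Q"
    and iY: "integrable (Pdo M d th) (\<lambda>\<omega>. \<omega> Y 0)" and B: "B \<in> sets (XZspace Z)"
  shows "(\<integral>\<omega>. indicator B (\<omega> X, restrict \<omega> Z) * \<omega> Y 0 \<partial>Pdo M d th)
     = (\<integral>x. indicator B x * (enn2real (\<integral>\<^sup>+y. ennreal y \<partial>Q x) - enn2real (\<integral>\<^sup>+y. ennreal (- y) \<partial>Q x))
          \<partial>distr (Pdo M d th) (XZspace Z) (\<lambda>\<omega>. (\<omega> X, restrict \<omega> Z)))"
proof -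
  note mbd = meas_basic[OF sets_Pdo[of M d th] X Y S Z]
  have "(\<integral>\<omega>. indicator B (\<omega> X, restrict \<omega> Z) * \<omega> Y 0 \<partial>Pdo M d th)
     = (\<integral>\<omega>. indicator B (\<omega> X, restrict \<omega> Z) * (enn2real (\<integral>\<^sup>+y. ennreal y \<partial>Q (\<omega> X, restrict \<omega> Z)) - enn2real (\<integral>\<^sup>+y. ennreal (- y) \<partial>Q (\<omega> X, restrict \<omega> Z))) \<partial>Pdo M d th)"
    by (rule KP_real(2)[OF mbd(1) mbd(2) Qs KPd iY B])
  also have "\<dots> = (\<integral>x. indicator B x * (enn2real (\<integral>\<^sup>+y. ennreal y \<partial>Q x) - enn2real (\<integral>\<^sup>+y. ennreal (- y) \<partial>Q x))
          \<partial>distr (Pdo M d th) (XZspace Z) (\<lambda>\<omega>. (\<omega> X, restrict \<omega> Z)))"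
    by (rule DI[OF mbd(1) mm_meas[OF Qs] B])
  finally show ?thesis .
qed

lemma mxyz_meas:
  fixes M :: "'v scm"
  assumes X: "X \<in> endo M" and Y: "Y \<in> endo M" and S: "S \<in> endo M" and Z: "Z \<subseteq> endo M"
  shows "(\<lambda>\<omega>. (\<omega> X, \<omega> Y 0, restrict \<omega> Z)) \<in> measurable (Psel M S d' th') (XYZspace Z)"
proof -
  note mbs = meas_basic[OF sets_Psel[of M S d' th'] X Y S Z]
  have mz: "(\<lambda>\<omega>. restrict \<omega> Z) \<in> measurable (Psel M S d' th') (PiM Z (\<lambda>_. vspace))"
    using measurable_compose[OF mbs(1)[unfolded XZspace_def] measurable_snd] by simp
  show ?thesis
    unfolding XYZspace_def by (rule measurable_Pair[OF mbs(4) measurable_Pair[OF mbs(2) mz]])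
qed

lemma sel_distr:
  fixes M :: "'v scm"
  assumes X: "X \<in> endo M" and Y: "Y \<in> endo M" and S: "S \<in> endo M" and Z: "Z \<subseteq> endo M"
  shows "distr (Psel M S d' th') (XZspace Z) (\<lambda>\<omega>. (\<omega> X, restrict \<omega> Z))
    = distr (distr (Psel M S d' th') (XYZspace Z) (\<lambda>\<omega>. (\<omega> X, \<omega> Y 0, restrict \<omega> Z))) (XZspace Z) (\<lambda>t. (fst t, snd (snd t)))"
proof -
  have mp: "(\<lambda>t::vec \<times> real \<times> ('v \<Rightarrow> vec). (fst t, snd (snd t))) \<in> measurable (XYZspace Z) (XZspace Z)"
    unfolding XYZspace_def XZspace_def
    by (rule measurable_Pair[OF measurable_fst measurable_compose[OF measurable_snd measurable_snd]])
  show ?thesis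
    by (subst distr_distr[OF mp mxyz_meas[OF X Y S Z]]) (simp add: comp_def)
qed

lemma Fs_meas:
  assumes Qs: "Q \<in> measurable N (subprob_algebra (borel :: real measure))" and sm: "s \<in> borel_measurable (borel :: real measure)"
  shows "(\<lambda>x. \<integral>\<^sup>+y. ennreal (s y) \<partial>Q x) \<in> borel_measurable N"
proof -
  have mE: "(\<lambda>y::real. ennreal (s y)) \<in> borel_measurable borel" by (rule measurable_compose[OF sm measurable_ennreal])
  show ?thesis by (rule measurable_compose[OF Qs nn_integral_measurable_subprob_algebra[OF mE]])
qed

lemma part1:
  fixes M1 M2 :: "'v scm"
  assumes H1: "hyps Th X Yh Y S Z d th d' th' M1" and H2: "hyps Th X Yh Y S Z d th d' th' M2"
    and dd: "d \<in> {0,1}" "d' \<in> {0,1}" "th \<in> Th" "th' \<in> Th"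
    and ob: "obs X Y S Z d th d' th' M1 = obs X Y S Z d th d' th' M2"
    and C1: "is_cexp (Pdo M1 d th) (\<lambda>\<omega>. \<omega> X) vspace (\<lambda>\<omega>. \<omega> Y 0) h1"
    and C2: "is_cexp (Pdo M2 d th) (\<lambda>\<omega>. \<omega> X) vspace (\<lambda>\<omega>. \<omega> Y 0) h2"
  shows "AE x in distr (Pdo M1 d th) vspace (\<lambda>\<omega>. \<omega> X). h1 x = h2 x"
proof -
  note hu1 = hyps_unfold[OF H1] and hu2 = hyps_unfold[OF H2]
  obtain Q1 where Q1: "Q1 \<in> measurable (XZspace Z) (subprob_algebra borel)"
    "KP (Pdo M1 d th) (XZspace Z) (\<lambda>\<omega>. (\<omega> X, restrict \<omega> Z)) (\<lambda>\<omega>. \<omega> Y 0) Q1"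
    "KP (Psel M1 S d' th') (XZspace Z) (\<lambda>\<omega>. (\<omega> X, restrict \<omega> Z)) (\<lambda>\<omega>. \<omega> Y 0) Q1"
    by (rule get_Q[OF H1 dd])
  obtain Q2 where Q2: "Q2 \<in> measurable (XZspace Z) (subprob_algebra borel)"
    "KP (Pdo M2 d th) (XZspace Z) (\<lambda>\<omega>. (\<omega> X, restrict \<omega> Z)) (\<lambda>\<omega>. \<omega> Y 0) Q2"
    "KP (Psel M2 S d' th') (XZspace Z) (\<lambda>\<omega>. (\<omega> X, restrict \<omega> Z)) (\<lambda>\<omega>. \<omega> Y 0) Q2"
    by (rule get_Q[OF H2 dd])
  note mbd1 = meas_basic[OF sets_Pdo[of M1 d th] hu1(2,3,4,5)]
  note mbd2 = meas_basic[OF sets_Pdo[of M2 d th] hu2(2,3,4,5)]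
  note mbs1 = meas_basic[OF sets_Psel[of M1 S d' th'] hu1(2,3,4,5)]
  note mbs2 = meas_basic[OF sets_Psel[of M2 S d' th'] hu2(2,3,4,5)]
  have L: "distr (Psel M1 S d' th') (XYZspace Z) (\<lambda>\<omega>. (\<omega> X, \<omega> Y 0, restrict \<omega> Z))
      = distr (Psel M2 S d' th') (XYZspace Z) (\<lambda>\<omega>. (\<omega> X, \<omega> Y 0, restrict \<omega> Z))"
    and D: "distr (Pdo M1 d th) (XZspace Z) (\<lambda>\<omega>. (\<omega> X, restrict \<omega> Z))
      = distr (Pdo M2 d th) (XZspace Z) (\<lambda>\<omega>. (\<omega> X, restrict \<omega> Z))"
    using ob unfolding obs_def by simp_all
  define \<mu>s where "\<mu>s = distr (Psel M1 S d' th') (XZspace Z) (\<lambda>\<omega>. (\<omega> X, restrict \<omega> Z))"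
  have \<mu>s2: "distr (Psel M2 S d' th') (XZspace Z) (\<lambda>\<omega>. (\<omega> X, restrict \<omega> Z)) = \<mu>s"
    unfolding \<mu>s_def sel_distr[OF hu1(2,3,4,5)] sel_distr[OF hu2(2,3,4,5)] L ..
  have fin: "finite_measure \<mu>s" unfolding \<mu>s_def
    by (rule finite_measure.finite_measure_distr[OF finite_Psel[OF hu1(1) hu1(4)] mbs1(1)])
  have AEF: "AE x in \<mu>s. (\<integral>\<^sup>+y. ennreal (s y) \<partial>Q1 x) = (\<integral>\<^sup>+y. ennreal (s y) \<partial>Q2 x)"
    if sm: "s \<in> borel_measurable borel" for s :: "real \<Rightarrow> real"
  proof (rule NNU[OF fin])
    show "(\<lambda>x. \<integral>\<^sup>+y. ennreal (s y) \<partial>Q1 x) \<in> borel_measurable \<mu>s"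
      unfolding \<mu>s_def using Fs_meas[OF Q1(1) sm] by simp
    show "(\<lambda>x. \<integral>\<^sup>+y. ennreal (s y) \<partial>Q2 x) \<in> borel_measurable \<mu>s"
      unfolding \<mu>s_def using Fs_meas[OF Q2(1) sm] by simp
    fix B assume "B \<in> sets \<mu>s"
    then have B: "B \<in> sets (XZspace Z)" by (simp add: \<mu>s_def)
    have "(\<integral>\<^sup>+x. indicator B x * (\<integral>\<^sup>+y. ennreal (s y) \<partial>Q1 x) \<partial>\<mu>s)
       = (\<integral>\<^sup>+t. indicator B (fst t, snd (snd t)) * ennreal (s (fst (snd t))) \<partial>distr (Psel M1 S d' th') (XYZspace Z) (\<lambda>\<omega>. (\<omega> X, \<omega> Y 0, restrict \<omega> Z)))"
      unfolding \<mu>s_def by (rule sel_chain[OF hu1(2,3,4,5) Q1(1) Q1(3) sm B])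
    also have "\<dots> = (\<integral>\<^sup>+t. indicator B (fst t, snd (snd t)) * ennreal (s (fst (snd t))) \<partial>distr (Psel M2 S d' th') (XYZspace Z) (\<lambda>\<omega>. (\<omega> X, \<omega> Y 0, restrict \<omega> Z)))"
      unfolding L ..
    also have "\<dots> = (\<integral>\<^sup>+x. indicator B x * (\<integral>\<^sup>+y. ennreal (s y) \<partial>Q2 x) \<partial>\<mu>s)"
      unfolding \<mu>s2[symmetric] by (rule sel_chain[OF hu2(2,3,4,5) Q2(1) Q2(3) sm B, symmetric])
    finally show "(\<integral>\<^sup>+x. indicator B x * (\<integral>\<^sup>+y. ennreal (s y) \<partial>Q1 x) \<partial>\<mu>s) = (\<integral>\<^sup>+x. indicator B x * (\<integral>\<^sup>+y. ennreal (s y) \<partial>Q2 x) \<partial>\<mu>s)" .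
  qed
  have s1: "(\<lambda>y::real. y) \<in> borel_measurable borel" by (rule measurable_ident_sets) simp
  have s2: "(\<lambda>y::real. - y) \<in> borel_measurable borel" by (rule borel_measurable_uminus[OF s1])
  define D1 where "D1 = distr (Pdo M1 d th) (XZspace Z) (\<lambda>\<omega>. (\<omega> X, restrict \<omega> Z))"
  have toD: "AE x in D1. P x" if "AE x in \<mu>s. P x" for P
    unfolding D1_def by (rule absolutely_continuous_AE[OF _ hu1(7)[folded \<mu>s_def] that]) (simp add: \<mu>s_def)
  define m1 where "m1 = (\<lambda>x. enn2real (\<integral>\<^sup>+y. ennreal y \<partial>Q1 x) - enn2real (\<integral>\<^sup>+y. ennreal (- y) \<partial>Q1 x))"
  define m2 where "m2 = (\<lambda>x. enn2real (\<integral>\<^sup>+y. ennreal y \<partial>Q2 x) - enn2real (\<integral>\<^sup>+y. ennreal (- y) \<partial>Q2 x))"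
  have AEm: "AE x in D1. m1 x = m2 x"
    using toD[OF AEF[OF s1]] toD[OF AEF[OF s2]] by eventually_elim (simp add: m1_def m2_def)
  have m1m: "m1 \<in> borel_measurable (XZspace Z)" unfolding m1_def by (rule mm_meas[OF Q1(1)])
  have m2m: "m2 \<in> borel_measurable (XZspace Z)" unfolding m2_def by (rule mm_meas[OF Q2(1)])
  have iY1: "integrable (Pdo M1 d th) (\<lambda>\<omega>. \<omega> Y 0)" and h1m: "h1 \<in> borel_measurable vspace"
    and ih1: "integrable (Pdo M1 d th) (\<lambda>\<omega>. h1 (\<omega> X))"
    and e1: "\<And>A. A \<in> sets vspace \<Longrightarrow> set_lebesgue_integral (Pdo M1 d th) ((\<lambda>\<omega>. \<omega> X) -` A \<inter> space (Pdo M1 d th)) (\<lambda>\<omega>. \<omega> Y 0)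
           = set_lebesgue_integral (Pdo M1 d th) ((\<lambda>\<omega>. \<omega> X) -` A \<inter> space (Pdo M1 d th)) (\<lambda>\<omega>. h1 (\<omega> X))"
    using C1 unfolding is_cexp_def by auto
  have iY2: "integrable (Pdo M2 d th) (\<lambda>\<omega>. \<omega> Y 0)" and h2m: "h2 \<in> borel_measurable vspace"
    and ih2: "integrable (Pdo M2 d th) (\<lambda>\<omega>. h2 (\<omega> X))"
    and e2: "\<And>A. A \<in> sets vspace \<Longrightarrow> set_lebesgue_integral (Pdo M2 d th) ((\<lambda>\<omega>. \<omega> X) -` A \<inter> space (Pdo M2 d th)) (\<lambda>\<omega>. \<omega> Y 0)
           = set_lebesgue_integral (Pdo M2 d th) ((\<lambda>\<omega>. \<omega> X) -` A \<inter> space (Pdo M2 d th)) (\<lambda>\<omega>. h2 (\<omega> X))"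
    using C2 unfolding is_cexp_def by auto
  have YB: "(\<integral>\<omega>. indicator B (\<omega> X, restrict \<omega> Z) * \<omega> Y 0 \<partial>Pdo M1 d th) = (\<integral>\<omega>. indicator B (\<omega> X, restrict \<omega> Z) * \<omega> Y 0 \<partial>Pdo M2 d th)"
    if B: "B \<in> sets (XZspace Z)" for B
  proof -
    have "(\<integral>\<omega>. indicator B (\<omega> X, restrict \<omega> Z) * \<omega> Y 0 \<partial>Pdo M1 d th) = (\<integral>x. indicator B x * m1 x \<partial>D1)"
      unfolding m1_def D1_def by (rule pdo_chain[OF hu1(2,3,4,5) Q1(1) Q1(2) iY1 B])
    also have "\<dots> = (\<integral>x. indicator B x * m2 x \<partial>D1)"
    proof (rule integral_cong_AE)
      show "AE x in D1. indicator B x * m1 x = indicator B x * m2 x" using AEm by eventually_elim simp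
    qed (auto simp: D1_def intro!: borel_measurable_times borel_measurable_indicator[OF B] m1m m2m)
    also have "\<dots> = (\<integral>\<omega>. indicator B (\<omega> X, restrict \<omega> Z) * \<omega> Y 0 \<partial>Pdo M2 d th)"
      unfolding m2_def D1_def D by (rule pdo_chain[OF hu2(2,3,4,5) Q2(1) Q2(2) iY2 B, symmetric])
    finally show ?thesis .
  qed
  have XA: "(\<integral>\<omega>. indicator A (\<omega> X) * \<omega> Y 0 \<partial>Pdo M d th) = (\<integral>\<omega>. indicator (fst -` A \<inter> space (XZspace Z)) (\<omega> X, restrict \<omega> Z) * \<omega> Y 0 \<partial>Pdo M d th)"
    if "(\<lambda>\<omega>. (\<omega> X, restrict \<omega> Z)) \<in> measurable (Pdo M d th) (XZspace Z)" for A and M :: "'v scm"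
    using measurable_space[OF that] by (intro Bochner_Integration.integral_cong) (auto split: split_indicator)
  have dX: "distr (Pdo M1 d th) vspace (\<lambda>\<omega>. \<omega> X) = distr (Pdo M2 d th) vspace (\<lambda>\<omega>. \<omega> X)"
  proof -
    have mf: "fst \<in> measurable (XZspace Z) vspace" unfolding XZspace_def by (rule measurable_fst)
    have "distr (Pdo M1 d th) vspace (\<lambda>\<omega>. \<omega> X) = distr (distr (Pdo M1 d th) (XZspace Z) (\<lambda>\<omega>. (\<omega> X, restrict \<omega> Z))) vspace fst"
      by (subst distr_distr[OF mf mbd1(1)]) (simp add: comp_def)
    also have "\<dots> = distr (distr (Pdo M2 d th) (XZspace Z) (\<lambda>\<omega>. (\<omega> X, restrict \<omega> Z))) vspace fst" unfolding D ..
    also have "\<dots> = distr (Pdo M2 d th) vspace (\<lambda>\<omega>. \<omega> X)"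
      by (subst distr_distr[OF mf mbd2(1)]) (simp add: comp_def)
    finally show ?thesis .
  qed
  show ?thesis
  proof (rule UQd[where Wa="\<lambda>\<omega>. \<omega> X" and Wb="\<lambda>\<omega>. \<omega> X" and Pa="Pdo M1 d th" and Pb="Pdo M2 d th" and N=vspace and ha=h1 and hb=h2])
    show "(\<lambda>\<omega>. \<omega> X) \<in> measurable (Pdo M1 d th) vspace" by (rule mbd1(4))
    show "(\<lambda>\<omega>. \<omega> X) \<in> measurable (Pdo M2 d th) vspace" by (rule mbd2(4))
    show "distr (Pdo M1 d th) vspace (\<lambda>\<omega>. \<omega> X) = distr (Pdo M2 d th) vspace (\<lambda>\<omega>. \<omega> X)" by (rule dX)
    show "h1 \<in> borel_measurable vspace" by (rule h1m)
    show "h2 \<in> borel_measurable vspace" by (rule h2m)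
    show "integrable (Pdo M1 d th) (\<lambda>\<omega>. h1 (\<omega> X))" by (rule ih1)
    show "integrable (Pdo M2 d th) (\<lambda>\<omega>. h2 (\<omega> X))" by (rule ih2)
    fix A assume A: "A \<in> sets vspace"
    have B: "fst -` A \<inter> space (XZspace Z) \<in> sets (XZspace Z)" unfolding XZspace_def
      by (rule measurable_sets[OF measurable_fst A[unfolded XZspace_def]])
    have "(\<integral>\<omega>. indicator A (\<omega> X) * h1 (\<omega> X) \<partial>Pdo M1 d th) = (\<integral>\<omega>. indicator A (\<omega> X) * \<omega> Y 0 \<partial>Pdo M1 d th)"
      using e1[OF A] unfolding SI[OF mbd1(4)] by simp
    also have "\<dots> = (\<integral>\<omega>. indicator A (\<omega> X) * \<omega> Y 0 \<partial>Pdo M2 d th)"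
      unfolding XA[OF mbd1(1)] XA[OF mbd2(1)] by (rule YB[OF B])
    also have "\<dots> = (\<integral>\<omega>. indicator A (\<omega> X) * h2 (\<omega> X) \<partial>Pdo M2 d th)"
      using e2[OF A] unfolding SI[OF mbd2(4)] by simp
    finally show "(\<integral>\<omega>. indicator A (\<omega> X) * h1 (\<omega> X) \<partial>Pdo M1 d th) = (\<integral>\<omega>. indicator A (\<omega> X) * h2 (\<omega> X) \<partial>Pdo M2 d th)" .
  qed
qed

lemma UQ1:
  fixes f :: "'a \<Rightarrow> real" and ha hb :: "'b \<Rightarrow> real"
  assumes A: "is_cexp P W N f ha" and B: "is_cexp P W N f hb"
  shows "AE x in distr P N W. ha x = hb x"
proof -
  have W: "W \<in> measurable P N" and ham: "ha \<in> borel_measurable N" and iha: "integrable P (\<lambda>\<omega>. ha (W \<omega>))"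
    and ea: "\<And>A. A \<in> sets N \<Longrightarrow> set_lebesgue_integral P (W -` A \<inter> space P) f = set_lebesgue_integral P (W -` A \<inter> space P) (\<lambda>\<omega>. ha (W \<omega>))"
    using A unfolding is_cexp_def by auto
  have hbm: "hb \<in> borel_measurable N" and ihb: "integrable P (\<lambda>\<omega>. hb (W \<omega>))"
    and eb: "\<And>A. A \<in> sets N \<Longrightarrow> set_lebesgue_integral P (W -` A \<inter> space P) f = set_lebesgue_integral P (W -` A \<inter> space P) (\<lambda>\<omega>. hb (W \<omega>))"
    using B unfolding is_cexp_def by auto
  show ?thesis
  proof (rule UQd[where Wa=W and Wb=W and Pa=P and Pb=P and N=N and ha=ha and hb=hb, OF W W refl ham hbm iha ihb])
    fix A assume A: "A \<in> sets N"
    show "(\<integral>\<omega>. indicator A (W \<omega>) * ha (W \<omega>) \<partial>P) = (\<integral>\<omega>. indicator A (W \<omega>) * hb (W \<omega>) \<partial>P)"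
      using ea[OF A] eb[OF A] unfolding SI[OF W] by simp
  qed
qed

theorem mainTheorem5:
  fixes X Yh Y S :: 'v and Z :: "'v set" and Th :: "vec set"
    and d d' :: real and th th' :: vec and k :: nat
  assumes "Th \<subseteq> euc k"
    and "d \<in> {0, 1}" and "d' \<in> {0, 1}" and "th \<in> Th" and "th' \<in> Th"
  shows
    "(\<forall>M1 M2. hyps Th X Yh Y S Z d th d' th' M1 \<longrightarrow> hyps Th X Yh Y S Z d th d' th' M2 \<longrightarrow>
        obs X Y S Z d th d' th' M1 = obs X Y S Z d th d' th' M2 \<longrightarrow>
        (\<forall>h1 h2. is_cexp (Pdo M1 d th) (\<lambda>\<omega>. \<omega> X) vspace (\<lambda>\<omega>. \<omega> Y 0) h1 \<longrightarrow>
                 is_cexp (Pdo M2 d th) (\<lambda>\<omega>. \<omega> X) vspace (\<lambda>\<omega>. \<omega> Y 0) h2 \<longrightarrow>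
                 (AE x in distr (Pdo M1 d th) vspace (\<lambda>\<omega>. \<omega> X). h1 x = h2 x)))
     \<and>
     (\<forall>M. hyps Th X Yh Y S Z d th d' th' M \<longrightarrow>
        (\<forall>g h. is_cexp (Psel M S d' th') (\<lambda>\<omega>. (\<omega> X, restrict \<omega> Z)) (XZspace Z)
                  (\<lambda>\<omega>. \<omega> Y 0) g \<longrightarrow>
               is_cexp (Pdo M d th) (\<lambda>\<omega>. \<omega> X) vspace
                  (\<lambda>\<omega>. g (\<omega> X, restrict \<omega> Z)) h \<longrightarrow>
               (\<forall>h'. is_cexp (Pdo M d th) (\<lambda>\<omega>. \<omega> X) vspace (\<lambda>\<omega>. \<omega> Y 0) h' \<longrightarrow>
                     (AE x in distr (Pdo M d th) vspace (\<lambda>\<omega>. \<omega> X). h' x = h x)) \<and>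
               (integrable (Pdo M d th) (\<lambda>\<omega>. \<omega> Y 0) \<longrightarrow>
                  is_cexp (Pdo M d th) (\<lambda>\<omega>. \<omega> X) vspace (\<lambda>\<omega>. \<omega> Y 0) h)))"
proof (intro conjI allI impI)
  fix M1 M2 h1 h2
  assume H1: "hyps Th X Yh Y S Z d th d' th' M1" and H2: "hyps Th X Yh Y S Z d th d' th' M2"
    and ob: "obs X Y S Z d th d' th' M1 = obs X Y S Z d th d' th' M2"
    and C1: "is_cexp (Pdo M1 d th) (\<lambda>\<omega>. \<omega> X) vspace (\<lambda>\<omega>. \<omega> Y 0) h1"
    and C2: "is_cexp (Pdo M2 d th) (\<lambda>\<omega>. \<omega> X) vspace (\<lambda>\<omega>. \<omega> Y 0) h2"
  show "AE x in distr (Pdo M1 d th) vspace (\<lambda>\<omega>. \<omega> X). h1 x = h2 x"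
    by (rule part1[OF H1 H2 assms(2,3,4,5) ob C1 C2])
next
  fix M g h
  assume H: "hyps Th X Yh Y S Z d th d' th' M"
    and G: "is_cexp (Psel M S d' th') (\<lambda>\<omega>. (\<omega> X, restrict \<omega> Z)) (XZspace Z) (\<lambda>\<omega>. \<omega> Y 0) g"
    and Hc: "is_cexp (Pdo M d th) (\<lambda>\<omega>. \<omega> X) vspace (\<lambda>\<omega>. g (\<omega> X, restrict \<omega> Z)) h"
  {
    fix h' assume C': "is_cexp (Pdo M d th) (\<lambda>\<omega>. \<omega> X) vspace (\<lambda>\<omega>. \<omega> Y 0) h'"
    then have iY: "integrable (Pdo M d th) (\<lambda>\<omega>. \<omega> Y 0)" unfolding is_cexp_def by simp
    have "is_cexp (Pdo M d th) (\<lambda>\<omega>. \<omega> X) vspace (\<lambda>\<omega>. \<omega> Y 0) h"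
      by (rule part2[OF H assms(2,3,4,5) G Hc iY])
    then show "AE x in distr (Pdo M d th) vspace (\<lambda>\<omega>. \<omega> X). h' x = h x"
      by (rule UQ1[OF C'])
  }
  assume iY: "integrable (Pdo M d th) (\<lambda>\<omega>. \<omega> Y 0)"
  show "is_cexp (Pdo M d th) (\<lambda>\<omega>. \<omega> X) vspace (\<lambda>\<omega>. \<omega> Y 0) h"
    by (rule part2[OF H assms(2,3,4,5) G Hc iY])
qed

end
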